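(* Let $\mu\in\mathcal{C}([0,\infty);\mathcal{P}_2(\mathbb{R}^2))$ be a global measure-valued solution of $\partial_t\mu+\partial_x(F[\mu]\mu)=0$, let $x_c(t):=\int x\,\mu_t(dx,d\omega)$ and $\tilde\mu_t:=\delta_{x_c(t)}\otimes\nu$ for $t\ge0$. Then for all $t\ge0$, $$\Big|\frac{d}{dt}x_c(t)-F[\tilde\mu_t](x_c(t),\omega_c)\Big|\le((\kappa+1)I+\kappa M)\,W_1(\mu_t,\tilde\mu_t)+I\gamma.$$
   Context: $\nu$ is a Borel probability measure on $\mathbb{R}$ with finite second moment and bounded support $\Omega$; $\gamma:=\sup_{\omega,\omega'\in\Omega}|\omega-\omega'|$, $\omega_c:=\int\omega\,\nu(d\omega)$. $\mathcal{P}_2^\nu(\mathbb{R}^2)$: Borel probability measures on $\mathbb{R}^2$ with finite second moment and $\omega$-marginal $\nu$. $W_1$: 1-Wasserstein distance. $F$ assigns to each $\mu\in\mathcal{P}_2^\nu(\mathbb{R}^2)$ a function $F[\mu]:\mathbb{R}^2\to\mathbb{R}$ satisfying, with constants $A,B,I,M,\kappa>0$: (A1) $\sup_{(x,\omega)\in\mathbb{R}\times\Omega}|\partial_x^\alpha F[\mu](x,\omega)-\partial_x^\alpha F[\mu'](x,\omega)|\le\kappa MW_1(\mu,\mu')$ for $\alpha=0,1$; (A2) $F[\mu]\in C^2(\mathbb{R}^2)$, $\|\partial_xF[\mu]\|_\infty\le\kappa I$, $\|\partial_x^2F[\mu]\|_\infty\le\kappa I$, $\|\partial_\omega F[\mu]\|_\infty\le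 I$; (A3) $F[(\tau_{2\pi})_\sharp\mu](x+2\pi,\omega)=F[\mu](x,\omega)$ with $\tau_{2\pi}(x,\omega)=(x+2\pi,\omega)$; (A4) $\inf_xF[\delta_x\otimes\nu](x,\omega_c)\ge A$; (A5) $\int_0^{2\pi}\frac{\partial_xF[\delta_x\otimes\nu](x,\omega_c)}{F[\delta_x\otimes\nu](x,\omega_c)}dx\le-\kappa B$ (derivatives in the spatial arguments with $\mu$ fixed). A global measure-valued solution with initial datum $\mu_0\in\mathcal{P}_2^\nu(\mathbb{R}^2)$ is $\mu\in\mathcal{C}([0,\infty);\mathcal{P}_2(\mathbb{R}^2))$ (with $\omega$-marginal $\nu$ for all $t$) such that $t\mapsto\int\varphi d\mu_t$ is continuous for $\varphi\in\mathcal{C}_0(\mathbb{R}^2)$ and $\int\varphi(t)d\mu_t=\int\varphi(0)d\mu_0+\int_0^t\int(\partial_s\varphi+F[\mu_s]\partial_x\varphi)d\mu_sds$ for all $\varphi\in\mathcal{C}^1_0([0,\infty)\times\mathbb{R}^2)$. *)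

theory Defs
  imports "HOL-Probability.Probability"
begin

definition P2 :: "('a::euclidean_space) measure set" where
  "P2 = {M. prob_space M \<and> sets M = sets borel \<and> integrable M (\<lambda>p. (norm p)^2)}"

definition P2nu :: "real measure \<Rightarrow> (real \<times> real) measure set" where
  "P2nu \<nu> = {M \<in> P2. distr M borel snd = \<nu>}"

definition couplings :: "('a::euclidean_space) measure \<Rightarrow> 'a measure \<Rightarrow> ('a \<times> 'a) measure set" where
  "couplings M N = {\<pi>. prob_space \<pi> \<and> sets \<pi> = sets borel \<and>
     distr \<pi> borel fst = M \<and> distr \<pi> borel snd = N}"

definition wasserstein :: "real \<Rightarrow> ('a::euclidean_space) measure \<Rightarrow> 'a measure \<Rightarrow> real" where
  "wasserstein p M N =
     (Inf {(\<integral>z. (dist (fst z) (snd z)) powr p \<partial>\<pi>) | \<pi>.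
             \<pi> \<in> couplings M N \<and> integrable \<pi> (\<lambda>z. (dist (fst z) (snd z)) powr p)}) powr (1 / p)"

abbreviation W1 :: "('a::euclidean_space) measure \<Rightarrow> 'a measure \<Rightarrow> real" where
  "W1 \<equiv> wasserstein 1"

definition msupport :: "real measure \<Rightarrow> real set" where
  "msupport \<nu> = {w. \<forall>e>0. emeasure \<nu> (ball w e) > 0}"

definition pdx :: "(real \<Rightarrow> real \<Rightarrow> real) \<Rightarrow> real \<Rightarrow> real \<Rightarrow> real" where
  "pdx f x w = deriv (\<lambda>y. f y w) x"

definition pdw :: "(real \<Rightarrow> real \<Rightarrow> real) \<Rightarrow> real \<Rightarrow> real \<Rightarrow> real" where
  "pdw f x w = deriv (\<lambda>v. f x v) w"

definition C2 :: "('a::euclidean_space \<Rightarrow> real) \<Rightarrow> bool" where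
  "C2 f \<longleftrightarrow> (\<exists>Df D2f. (\<forall>p. (f has_derivative blinfun_apply (Df p)) (at p)) \<and>
     (\<forall>p. (Df has_derivative blinfun_apply (D2f p)) (at p)) \<and> continuous_on UNIV D2f)"

definition C1 :: "('a::euclidean_space \<Rightarrow> real) \<Rightarrow> bool" where
  "C1 f \<longleftrightarrow> (\<exists>Df. (\<forall>p. (f has_derivative blinfun_apply (Df p)) (at p)) \<and> continuous_on UNIV Df)"

definition tsupport :: "('a::real_normed_vector \<Rightarrow> real) \<Rightarrow> 'a set" where
  "tsupport f = closure {p. f p \<noteq> 0}"

text \<open>Test functions in C^1_0([0,\<infinity>) x R^2) are taken as restrictions of compactly supported
  C^1 functions on R x R^2 (variables ordered (t,(x,omega))).\<close>
definition mvsol :: "((real \<times> real) measure \<Rightarrow> real \<Rightarrow> real \<Rightarrow> real) \<Rightarrow> real measure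
    \<Rightarrow> (real \<Rightarrow> (real \<times> real) measure) \<Rightarrow> bool" where
  "mvsol F \<nu> \<mu> \<longleftrightarrow>
     (\<forall>t\<ge>0. \<mu> t \<in> P2nu \<nu>) \<and>
     (\<forall>t\<ge>0. ((\<lambda>s. wasserstein 2 (\<mu> s) (\<mu> t)) \<longlongrightarrow> 0) (at t within {0..})) \<and>
     (\<forall>\<phi>::real \<times> real \<Rightarrow> real. continuous_on UNIV \<phi> \<and> compact (tsupport \<phi>) \<longrightarrow>
        continuous_on {0..} (\<lambda>t. \<integral>p. \<phi> p \<partial>(\<mu> t))) \<and>
     (\<forall>\<phi>::real \<times> (real \<times> real) \<Rightarrow> real. C1 \<phi> \<and> compact (tsupport \<phi>) \<longrightarrow>
        (\<forall>t\<ge>0. (\<integral>p. \<phi> (t, p) \<partial>(\<mu> t)) =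
            (\<integral>p. \<phi> (0, p) \<partial>(\<mu> 0)) +
            integral {0..t} (\<lambda>s. \<integral>p. (deriv (\<lambda>r. \<phi> (r, p)) s
                + F (\<mu> s) (fst p) (snd p) * deriv (\<lambda>y. \<phi> (s, (y, snd p))) (fst p)) \<partial>(\<mu> s))))"

end

theory Submission
  imports Defs
begin


lemma msupport_facts:
  fixes \<nu> :: "real measure"
  assumes sets: "sets \<nu> = sets borel"
  shows "closed (msupport \<nu>)" and "AE w in \<nu>. w \<in> msupport \<nu>"
proof -
  have sp: "space \<nu> = UNIV" using sets_eq_imp_space_eq[OF sets] by simp
  have ballm: "ball w e \<in> sets \<nu>" for w e using sets by simp
  define U where "U = - msupport \<nu>"
  have U: "U = {w. \<exists>e>0. emeasure \<nu> (ball w e) = 0}"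
    unfolding U_def msupport_def by (auto simp: not_less zero_less_iff_neq_zero)
  have "open U"
    unfolding open_dist
  proof safe
    fix w assume "w \<in> U"
    then obtain e where e: "e > 0" "emeasure \<nu> (ball w e) = 0" using U by auto
    show "\<exists>d>0. \<forall>y. dist y w < d \<longrightarrow> y \<in> U"
    proof (intro exI[of _ "e/2"] conjI allI impI)
      fix y assume "dist y w < e/2"
      then have "ball y (e/2) \<subseteq> ball w e" by (auto simp: dist_real_def abs_if split: if_splits)
      then have "emeasure \<nu> (ball y (e/2)) \<le> emeasure \<nu> (ball w e)"
        by (intro emeasure_mono ballm)
      then show "y \<in> U" using e U by (auto intro!: exI[of _ "e/2"])
    qed (use e in auto)
  qed
  then show "closed (msupport \<nu>)" unfolding U_def by (simp add: closed_def)
  define I where "I = {(q,r). q \<in> \<rat> \<and> r \<in> \<rat> \<and> emeasure \<nu> (ball q r) = 0}"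
  have cI: "countable I"
    by (rule countable_subset[of _ "\<rat> \<times> \<rat>"]) (auto simp: I_def intro: countable_rat)
  have N: "(\<Union>i\<in>I. ball (fst i) (snd i)) \<in> null_sets \<nu>"
    by (rule null_sets_UN'[OF cI]) (auto simp: I_def null_sets_def ballm)
  have sub: "U \<subseteq> (\<Union>i\<in>I. ball (fst i) (snd i))"
  proof
    fix w assume "w \<in> U"
    then obtain e where e: "e > 0" "emeasure \<nu> (ball w e) = 0" using U by auto
    obtain q where q: "q \<in> \<rat>" "w - e/3 < q" "q < w + e/3"
      using Rats_dense_in_real[of "w - e/3" "w + e/3"] e by auto
    obtain r where r: "r \<in> \<rat>" "e/3 < r" "r < 2*e/3"
      using Rats_dense_in_real[of "e/3" "2*e/3"] e by auto
    have "ball q r \<subseteq> ball w e" using q r by (auto simp: dist_real_def abs_if split: if_splits)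
    then have "emeasure \<nu> (ball q r) \<le> emeasure \<nu> (ball w e)"
      by (intro emeasure_mono ballm)
    then have "(q,r) \<in> I" using e q r by (auto simp: I_def)
    moreover have "w \<in> ball q r" using q r by (auto simp: dist_real_def abs_if split: if_splits)
    ultimately show "w \<in> (\<Union>i\<in>I. ball (fst i) (snd i))" by force
  qed
  show "AE w in \<nu>. w \<in> msupport \<nu>"
    by (rule AE_I'[OF N]) (use sub in \<open>auto simp: U_def\<close>)
qed


lemma P2D:
  fixes M :: "'a::euclidean_space measure"
  assumes "M \<in> P2"
  shows "prob_space M" "sets M = sets borel" "space M = UNIV"
    "integrable M (\<lambda>p. (norm p)^2)" "integrable M (\<lambda>p. norm p)"
proof -
  show pM: "prob_space M" and sM: "sets M = sets borel" and i2: "integrable M (\<lambda>p. (norm p)^2)"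
    using assms by (auto simp: P2_def)
  show "space M = UNIV" using sets_eq_imp_space_eq[OF sM] by simp
  interpret prob_space M by fact
  have i3: "integrable M (\<lambda>p. 1 + (norm p)^2)" using i2 by simp
  have le: "x \<le> 1 + x^2" if "x \<ge> 0" for x :: real
  proof (cases "x \<le> 1")
    case True then show ?thesis by (smt (verit) zero_le_power2)
  next
    case False then have "x*1 \<le> x*x" by (intro mult_left_mono) auto
    then show ?thesis by (simp add: power2_eq_square)
  qed
  show "integrable M (\<lambda>p. norm p)"
    by (rule Bochner_Integration.integrable_bound[OF i3]) (auto simp: measurable_cong_sets[OF sM refl] le
        intro!: AE_I2)
qed

lemma couplingD:
  assumes "\<pi> \<in> couplings M N"
  shows "prob_space \<pi>" "sets \<pi> = sets borel" "distr \<pi> borel fst = M" "distr \<pi> borel snd = N"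
  using assms by (auto simp: couplings_def)

lemma coupling_fst:
  fixes M N :: "'a::euclidean_space measure" and f :: "'a \<Rightarrow> real"
  assumes "\<pi> \<in> couplings M N" "f \<in> borel_measurable borel"
  shows "integrable \<pi> (\<lambda>z. f (fst z)) \<longleftrightarrow> integrable M f"
    "(\<integral>z. f (fst z) \<partial>\<pi>) = (\<integral>x. f x \<partial>M)"
proof -
  have s: "sets \<pi> = sets borel" and d: "distr \<pi> borel fst = M" using couplingD[OF assms(1)] by auto
  have m: "fst \<in> measurable \<pi> borel"
    using measurable_fst[of "borel::'a measure" "borel::'a measure"]
    by (simp add: measurable_cong_sets[OF s refl] borel_prod)
  show "integrable \<pi> (\<lambda>z. f (fst z)) \<longleftrightarrow> integrable M f"
    using integrable_distr_eq[OF m assms(2)] d by simp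
  show "(\<integral>z. f (fst z) \<partial>\<pi>) = (\<integral>x. f x \<partial>M)"
    using integral_distr[OF m assms(2)] d by simp
qed

lemma coupling_snd:
  fixes M N :: "'a::euclidean_space measure" and f :: "'a \<Rightarrow> real"
  assumes "\<pi> \<in> couplings M N" "f \<in> borel_measurable borel"
  shows "integrable \<pi> (\<lambda>z. f (snd z)) \<longleftrightarrow> integrable N f"
    "(\<integral>z. f (snd z) \<partial>\<pi>) = (\<integral>x. f x \<partial>N)"
proof -
  have s: "sets \<pi> = sets borel" and d: "distr \<pi> borel snd = N" using couplingD[OF assms(1)] by auto
  have m: "snd \<in> measurable \<pi> borel"
    using measurable_snd[of "borel::'a measure" "borel::'a measure"]
    by (simp add: measurable_cong_sets[OF s refl] borel_prod)
  show "integrable \<pi> (\<lambda>z. f (snd z)) \<longleftrightarrow> integrable N f"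
    using integrable_distr_eq[OF m assms(2)] d by simp
  show "(\<integral>z. f (snd z) \<partial>\<pi>) = (\<integral>x. f x \<partial>N)"
    using integral_distr[OF m assms(2)] d by simp
qed

lemma prod_coupling:
  fixes M N :: "'a::euclidean_space measure"
  assumes "prob_space M" "prob_space N" "sets M = sets borel" "sets N = sets borel"
  shows "M \<Otimes>\<^sub>M N \<in> couplings M N"
proof -
  have "pair_prob_space M N"
    using assms by (simp add: pair_prob_space_def pair_sigma_finite_def prob_space_imp_sigma_finite)
  then interpret pair_prob_space M N .
  have "sets (M \<Otimes>\<^sub>M N) = sets (borel \<Otimes>\<^sub>M borel)"
    by (rule sets_pair_measure_cong[OF assms(3,4)])
  also have "\<dots> = sets (borel :: ('a \<times> 'a) measure)" by (subst borel_prod) rule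
  finally have sp: "sets (M \<Otimes>\<^sub>M N) = sets borel" .
  have d1: "distr (M \<Otimes>\<^sub>M N) borel fst = M"
  proof -
    have "distr (M \<Otimes>\<^sub>M N) borel fst = distr (M \<Otimes>\<^sub>M N) M fst"
      by (rule distr_cong) (use assms in auto)
    also have "\<dots> = M" by (rule M2.distr_pair_fst)
    finally show ?thesis .
  qed
  have d2: "distr (M \<Otimes>\<^sub>M N) borel snd = N"
  proof -
    have "distr (M \<Otimes>\<^sub>M N) borel snd = distr (M \<Otimes>\<^sub>M N) N snd"
      by (rule distr_cong) (use assms in auto)
    also have "\<dots> = N"
    proof (intro measure_eqI)
      fix A assume A: "A \<in> sets (distr (M \<Otimes>\<^sub>M N) N snd)"
      from A have "emeasure (distr (M \<Otimes>\<^sub>M N) N snd) A = emeasure (M \<Otimes>\<^sub>M N) (space M \<times> A)"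
        by (auto simp add: emeasure_distr space_pair_measure dest: sets.sets_into_space
            intro!: arg_cong2[where f=emeasure])
      with A show "emeasure (distr (M \<Otimes>\<^sub>M N) N snd) A = emeasure N A"
        using M2.emeasure_pair_measure_Times[of "space M" M A] by (auto simp: M1.emeasure_space_1)
    qed simp
    finally show ?thesis .
  qed
  show ?thesis unfolding couplings_def using sp d1 d2 P.prob_space_axioms by auto
qed


lemma dist_measurable[measurable]:
  "(\<lambda>z. dist (fst z) (snd z)) \<in> borel_measurable (borel :: ('a::euclidean_space \<times> 'a) measure)"
  by (intro borel_measurable_continuous_onI continuous_intros)

lemma coupling_exists:
  fixes M N :: "'a::euclidean_space measure"
  assumes M: "M \<in> P2" and N: "N \<in> P2"
  shows "M \<Otimes>\<^sub>M N \<in> couplings M N"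
    "integrable (M \<Otimes>\<^sub>M N) (\<lambda>z. dist (fst z) (snd z))"
    "integrable (M \<Otimes>\<^sub>M N) (\<lambda>z. (dist (fst z) (snd z))^2)"
proof -
  note PM = P2D[OF M] and PN = P2D[OF N]
  show c: "M \<Otimes>\<^sub>M N \<in> couplings M N" by (rule prod_coupling) (use PM PN in auto)
  have s: "sets (M \<Otimes>\<^sub>M N) = sets borel" using couplingD[OF c] by simp
  have mn: "norm \<in> borel_measurable (borel::'a measure)"
    by (intro borel_measurable_continuous_onI continuous_intros)
  have mn2: "(\<lambda>p. (norm p)^2) \<in> borel_measurable (borel::'a measure)"
    by (intro borel_measurable_continuous_onI continuous_intros)
  have i1: "integrable (M \<Otimes>\<^sub>M N) (\<lambda>z. norm (fst z) + norm (snd z))"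
    using coupling_fst(1)[OF c mn] coupling_snd(1)[OF c mn] PM PN by auto
  have i2: "integrable (M \<Otimes>\<^sub>M N) (\<lambda>z. 2 * (norm (fst z))^2 + 2 * (norm (snd z))^2)"
    using coupling_fst(1)[OF c mn2] coupling_snd(1)[OF c mn2] PM PN by auto
  show "integrable (M \<Otimes>\<^sub>M N) (\<lambda>z. dist (fst z) (snd z))"
    by (rule Bochner_Integration.integrable_bound[OF i1])
       (auto simp: measurable_cong_sets[OF s refl] intro!: AE_I2, simp add: dist_norm norm_triangle_ineq4)
  show "integrable (M \<Otimes>\<^sub>M N) (\<lambda>z. (dist (fst z) (snd z))^2)"
  proof (rule Bochner_Integration.integrable_bound[OF i2])
    show "(\<lambda>z. (dist (fst z) (snd z))\<^sup>2) \<in> borel_measurable (M \<Otimes>\<^sub>M N)"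
      by (simp add: measurable_cong_sets[OF s refl])
    show "AE x in M \<Otimes>\<^sub>M N. norm ((dist (fst x) (snd x))\<^sup>2) \<le> norm (2 * (norm (fst x))\<^sup>2 + 2 * (norm (snd x))\<^sup>2)"
    proof (intro AE_I2)
      fix x :: "'a \<times> 'a"
      have d: "dist (fst x) (snd x) \<le> norm (fst x) + norm (snd x)"
        by (simp add: dist_norm norm_triangle_ineq4)
      have "(dist (fst x) (snd x))^2 \<le> (norm (fst x) + norm (snd x))^2"
        by (rule power_mono[OF d]) simp
      also have "\<dots> \<le> 2 * (norm (fst x))\<^sup>2 + 2 * (norm (snd x))\<^sup>2"
        by (smt (verit) power2_sum zero_le_power2 power2_diff)
      finally show "norm ((dist (fst x) (snd x))\<^sup>2) \<le> norm (2 * (norm (fst x))\<^sup>2 + 2 * (norm (snd x))\<^sup>2)"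
        by simp
    qed
  qed
qed

definition WS :: "real \<Rightarrow> ('a::euclidean_space) measure \<Rightarrow> 'a measure \<Rightarrow> real set" where
  "WS p M N = {(\<integral>z. (dist (fst z) (snd z)) powr p \<partial>\<pi>) | \<pi>.
             \<pi> \<in> couplings M N \<and> integrable \<pi> (\<lambda>z. (dist (fst z) (snd z)) powr p)}"

lemma wasserstein_WS: "wasserstein p M N = (Inf (WS p M N)) powr (1/p)"
  by (simp add: wasserstein_def WS_def)

lemma WS_nonneg: "c \<in> WS p M N \<Longrightarrow> 0 \<le> c"
  by (auto simp: WS_def)

lemma WS1_ne:
  fixes M N :: "'a::euclidean_space measure"
  assumes "M \<in> P2" "N \<in> P2"
  shows "WS 1 M N \<noteq> {}"
  using coupling_exists[OF assms] unfolding WS_def by auto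

lemma WS2_ne:
  fixes M N :: "'a::euclidean_space measure"
  assumes "M \<in> P2" "N \<in> P2"
  shows "WS 2 M N \<noteq> {}"
  using coupling_exists[OF assms] unfolding WS_def by auto

lemma W1_eq:
  fixes M N :: "'a::euclidean_space measure"
  assumes "M \<in> P2" "N \<in> P2"
  shows "W1 M N = Inf (WS 1 M N)" "0 \<le> W1 M N"
proof -
  have "0 \<le> Inf (WS 1 M N)"
    by (rule cInf_greatest[OF WS1_ne[OF assms]]) (rule WS_nonneg)
  then show "W1 M N = Inf (WS 1 M N)" "0 \<le> W1 M N" by (simp_all add: wasserstein_WS)
qed

lemma W1_lip:
  fixes M N :: "'a::euclidean_space measure" and g :: "'a \<Rightarrow> real"
  assumes M: "M \<in> P2" and N: "N \<in> P2" and cont: "continuous_on UNIV g"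
    and lip: "\<And>p q. \<bar>g p - g q\<bar> \<le> L * dist p q" and L: "L \<ge> 0"
    and iM: "integrable M g" and iN: "integrable N g"
  shows "\<bar>(\<integral>x. g x \<partial>M) - (\<integral>x. g x \<partial>N)\<bar> \<le> L * W1 M N"
proof -
  have mg: "g \<in> borel_measurable borel" by (rule borel_measurable_continuous_onI[OF cont])
  have bnd: "\<bar>(\<integral>x. g x \<partial>M) - (\<integral>x. g x \<partial>N)\<bar> \<le> L * c" if c: "c \<in> WS 1 M N" for c
  proof -
    obtain \<pi> where pi: "\<pi> \<in> couplings M N" "integrable \<pi> (\<lambda>z. dist (fst z) (snd z))"
      and cdef: "c = (\<integral>z. dist (fst z) (snd z) \<partial>\<pi>)"
      using c by (auto simp: WS_def)
    have i1: "integrable \<pi> (\<lambda>z. g (fst z))" using coupling_fst(1)[OF pi(1) mg] iM by simp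
    have i2: "integrable \<pi> (\<lambda>z. g (snd z))" using coupling_snd(1)[OF pi(1) mg] iN by simp
    have "(\<integral>x. g x \<partial>M) - (\<integral>x. g x \<partial>N) = (\<integral>z. g (fst z) - g (snd z) \<partial>\<pi>)"
      using coupling_fst(2)[OF pi(1) mg] coupling_snd(2)[OF pi(1) mg] i1 i2 by simp
    also have "\<bar>\<dots>\<bar> \<le> (\<integral>z. L * dist (fst z) (snd z) \<partial>\<pi>)"
      by (rule integral_abs_bound_integral) (use i1 i2 pi lip in auto)
    also have "\<dots> = L * c" using cdef by simp
    finally show ?thesis .
  qed
  have ne: "WS 1 M N \<noteq> {}" by (rule WS1_ne[OF M N])
  show ?thesis
  proof (cases "L = 0")
    case True
    obtain c where "c \<in> WS 1 M N" using ne by auto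
    then show ?thesis using bnd True by fastforce
  next
    case False
    then have Lp: "L > 0" using L by simp
    have "\<bar>(\<integral>x. g x \<partial>M) - (\<integral>x. g x \<partial>N)\<bar> / L \<le> Inf (WS 1 M N)"
      by (rule cInf_greatest[OF ne]) (use bnd Lp in \<open>auto simp: divide_le_eq mult.commute\<close>)
    then show ?thesis using W1_eq[OF M N] Lp by (simp add: divide_le_eq mult.commute)
  qed
qed


lemma W1_le_W2:
  fixes M N :: "'a::euclidean_space measure"
  assumes M: "M \<in> P2" and N: "N \<in> P2" and e: "e > 0" and w2: "wasserstein 2 M N < e"
  shows "W1 M N \<le> e"
proof -
  have ne: "WS 2 M N \<noteq> {}" by (rule WS2_ne[OF M N])
  have I0: "0 \<le> Inf (WS 2 M N)" by (rule cInf_greatest[OF ne]) (rule WS_nonneg)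
  have "sqrt (Inf (WS 2 M N)) < e" using w2 I0 by (simp add: wasserstein_WS powr_half_sqrt)
  then have "Inf (WS 2 M N) < e^2"
    using I0 e by (metis real_sqrt_less_iff real_sqrt_pow2 abs_of_pos real_sqrt_abs power2_eq_square)
  then obtain c where c: "c \<in> WS 2 M N" "c < e^2" using cInf_lessD[OF ne] by blast
  then obtain \<pi> where pi: "\<pi> \<in> couplings M N" "integrable \<pi> (\<lambda>z. (dist (fst z) (snd z)) powr 2)"
    and cdef: "c = (\<integral>z. (dist (fst z) (snd z)) powr 2 \<partial>\<pi>)"
    by (auto simp: WS_def)
  have s: "sets \<pi> = sets borel" using couplingD[OF pi(1)] by simp
  have i2: "integrable \<pi> (\<lambda>z. (dist (fst z) (snd z))^2)" using pi(2) by simp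
  have c2: "c = (\<integral>z. (dist (fst z) (snd z))^2 \<partial>\<pi>)" using cdef by simp
  have amgm: "d \<le> (d^2 + e^2) / (2*e)" for d :: real
  proof -
    have "0 \<le> (d - e)^2" by simp
    then have "2*e*d \<le> d^2 + e^2" by (simp add: power2_diff algebra_simps)
    then show ?thesis using e by (simp add: field_simps)
  qed
  have "prob_space \<pi>" using couplingD[OF pi(1)] by simp
  then interpret prob_space \<pi> .
  have i3: "integrable \<pi> (\<lambda>z. ((dist (fst z) (snd z))^2 + e^2) / (2*e))" using i2 by simp
  have i1: "integrable \<pi> (\<lambda>z. dist (fst z) (snd z))"
  proof (rule Bochner_Integration.integrable_bound[OF i3])
    show "(\<lambda>z. dist (fst z) (snd z)) \<in> borel_measurable \<pi>"
      by (simp add: measurable_cong_sets[OF s refl])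
    show "AE x in \<pi>. norm (dist (fst x) (snd x)) \<le> norm (((dist (fst x) (snd x))^2 + e^2) / (2*e))"
    proof (rule AE_I2)
      fix x
      have "dist (fst x) (snd x) \<le> ((dist (fst x) (snd x))^2 + e^2) / (2*e)" by (rule amgm)
      then show "norm (dist (fst x) (snd x)) \<le> norm (((dist (fst x) (snd x))^2 + e^2) / (2*e))"
        using e by simp
    qed
  qed
  have "(\<integral>z. dist (fst z) (snd z) \<partial>\<pi>) \<le> (\<integral>z. ((dist (fst z) (snd z))^2 + e^2) / (2*e) \<partial>\<pi>)"
    by (rule integral_mono[OF i1 i3]) (rule amgm)
  also have "\<dots> = (c + e^2) / (2*e)" using i2 c2 by (simp add: prob_space)
  also have "\<dots> \<le> e" using c e by (simp add: field_simps power2_eq_square)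
  finally have le: "(\<integral>z. dist (fst z) (snd z) \<partial>\<pi>) \<le> e" .
  have mem: "(\<integral>z. dist (fst z) (snd z) \<partial>\<pi>) \<in> WS 1 M N"
    unfolding WS_def using pi(1) i1 by auto
  have "Inf (WS 1 M N) \<le> e"
    by (rule cInf_lower2[OF mem le]) (auto simp: bdd_below_def intro: WS_nonneg)
  then show ?thesis using W1_eq[OF M N] by simp
qed

lemma lip_integrable:
  fixes M :: "'a::euclidean_space measure" and g :: "'a \<Rightarrow> real"
  assumes M: "M \<in> P2" and cont: "continuous_on UNIV g"
    and lip: "\<And>p q. \<bar>g p - g q\<bar> \<le> L * dist p q"
  shows "integrable M g"
proof -
  note PM = P2D[OF M]
  interpret prob_space M by (rule PM(1))
  have i: "integrable M (\<lambda>p. \<bar>g 0\<bar> + \<bar>L\<bar> * norm p)" using PM by simp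
  show ?thesis
  proof (rule Bochner_Integration.integrable_bound[OF i])
    show "g \<in> borel_measurable M"
      using borel_measurable_continuous_onI[OF cont] by (simp add: measurable_cong_sets[OF PM(2) refl])
    show "AE x in M. norm (g x) \<le> norm (\<bar>g 0\<bar> + \<bar>L\<bar> * norm x)"
    proof (intro AE_I2)
      fix x
      have "\<bar>g x - g 0\<bar> \<le> L * dist x 0" by (rule lip)
      also have "\<dots> \<le> \<bar>L\<bar> * norm x" by (simp add: mult_right_mono)
      finally show "norm (g x) \<le> norm (\<bar>g 0\<bar> + \<bar>L\<bar> * norm x)" by simp
    qed
  qed
qed

lemma lip1D:
  fixes f :: "real \<Rightarrow> real"
  assumes der: "\<And>x. DERIV f x :> f' x" and B: "\<And>x. \<bar>f' x\<bar> \<le> B"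
  shows "\<bar>f a - f b\<bar> \<le> B * \<bar>a - b\<bar>"
proof -
  have *: "\<bar>f y - f x\<bar> \<le> B * (y - x)" if xy: "x < y" for x y
  proof -
    obtain z where "f y - f x = (y - x) * f' z" using MVT2[OF xy, where f=f and f'=f'] der by blast
    then have "\<bar>f y - f x\<bar> = (y - x) * \<bar>f' z\<bar>" using xy by (simp add: abs_mult)
    also have "\<dots> \<le> (y - x) * B" using B[of z] xy by (intro mult_left_mono) auto
    finally show ?thesis by (simp add: mult.commute)
  qed
  show ?thesis
    using *[of a b] *[of b a] by (cases a b rule: linorder_cases) (auto simp: abs_minus_commute)
qed

lemma C2_partials:
  fixes f :: "real \<Rightarrow> real \<Rightarrow> real"
  assumes "C2 (\<lambda>p. f (fst p) (snd p))"
  shows "continuous_on UNIV (\<lambda>p. f (fst p) (snd p))"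
    "\<And>x w. DERIV (\<lambda>y. f y w) x :> pdx f x w"
    "\<And>x w. DERIV (\<lambda>v. f x v) w :> pdw f x w"
proof -
  obtain Df where Df: "\<And>p. ((\<lambda>p. f (fst p) (snd p)) has_derivative blinfun_apply (Df p)) (at p)"
    using assms unfolding C2_def by blast
  show "continuous_on UNIV (\<lambda>p. f (fst p) (snd p))"
    using Df has_derivative_continuous by (blast intro: continuous_at_imp_continuous_on)
  fix x w :: real
  have "((\<lambda>y. (y, w)) has_derivative (\<lambda>h. (h, 0))) (at x)" by (rule has_derivative_Pair has_derivative_ident has_derivative_const)+
  then have "(\<lambda>y. (y, w)) differentiable (at x)" by (rule differentiableI)
  moreover have "(\<lambda>p. f (fst p) (snd p)) differentiable (at (x, w))" by (rule differentiableI[OF Df])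
  ultimately have "((\<lambda>p. f (fst p) (snd p)) \<circ> (\<lambda>y. (y, w))) differentiable (at x)"
    by (rule differentiable_chain_at)
  then have "(\<lambda>y. f y w) differentiable (at x)" by (simp add: o_def)
  then show "DERIV (\<lambda>y. f y w) x :> pdx f x w"
    unfolding pdx_def by (simp add: DERIV_deriv_iff_real_differentiable)
  have "((\<lambda>v. (x, v)) has_derivative (\<lambda>h. (0, h))) (at w)" by (rule has_derivative_Pair has_derivative_ident has_derivative_const)+
  then have "(\<lambda>v. (x, v)) differentiable (at w)" by (rule differentiableI)
  moreover have "(\<lambda>p. f (fst p) (snd p)) differentiable (at (x, w))" by (rule differentiableI[OF Df])
  ultimately have "((\<lambda>p. f (fst p) (snd p)) \<circ> (\<lambda>v. (x, v))) differentiable (at w)"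
    by (rule differentiable_chain_at)
  then have "(\<lambda>v. f x v) differentiable (at w)" by (simp add: o_def)
  then show "DERIV (\<lambda>v. f x v) w :> pdw f x w"
    unfolding pdw_def by (simp add: DERIV_deriv_iff_real_differentiable)
qed

lemma C2_lip:
  fixes f :: "real \<Rightarrow> real \<Rightarrow> real"
  assumes "C2 (\<lambda>p. f (fst p) (snd p))"
    and bx: "\<And>x w. \<bar>pdx f x w\<bar> \<le> Bx" and bw: "\<And>x w. \<bar>pdw f x w\<bar> \<le> Bw"
  shows "\<bar>f x w - f x' w'\<bar> \<le> Bx * \<bar>x - x'\<bar> + Bw * \<bar>w - w'\<bar>"
    "\<bar>f (fst p) (snd p) - f (fst q) (snd q)\<bar> \<le> (Bx + Bw) * dist p q"
proof -
  note D = C2_partials[OF assms(1)]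
  have l1: "\<bar>f x w - f x' w\<bar> \<le> Bx * \<bar>x - x'\<bar>" for x x' w
    by (rule lip1D[OF D(2) bx])
  have l2: "\<bar>f x w - f x w'\<bar> \<le> Bw * \<bar>w - w'\<bar>" for x w w'
    by (rule lip1D[OF D(3) bw])
  show g: "\<bar>f x w - f x' w'\<bar> \<le> Bx * \<bar>x - x'\<bar> + Bw * \<bar>w - w'\<bar>" for x w x' w'
    using l1[of x w x'] l2[of x' w w'] by linarith
  have Bx0: "0 \<le> Bx" using bx[of 0 0] by linarith
  have Bw0: "0 \<le> Bw" using bw[of 0 0] by linarith
  have d1: "\<bar>fst p - fst q\<bar> \<le> dist p q" and d2: "\<bar>snd p - snd q\<bar> \<le> dist p q"
    by (metis dist_fst_le dist_real_def, metis dist_snd_le dist_real_def)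
  have "\<bar>f (fst p) (snd p) - f (fst q) (snd q)\<bar> \<le> Bx * \<bar>fst p - fst q\<bar> + Bw * \<bar>snd p - snd q\<bar>"
    by (rule g)
  also have "\<dots> \<le> Bx * dist p q + Bw * dist p q"
    by (intro add_mono mult_left_mono d1 d2 Bx0 Bw0)
  finally show "\<bar>f (fst p) (snd p) - f (fst q) (snd q)\<bar> \<le> (Bx + Bw) * dist p q"
    by (simp add: algebra_simps)
qed


definition pp :: "real \<Rightarrow> real" where "pp u = (max 0 u)^2"

lemma pp_deriv: "DERIV pp u :> 2 * max 0 u"
proof (cases u "0::real" rule: linorder_cases)
  case less
  have "((\<lambda>v. 0) has_field_derivative 0) (at u)" by simp
  then have "(pp has_field_derivative 0) (at u)"
    by (rule has_field_derivative_transform_within_open[where S="{..<0}"]) (use less in \<open>auto simp: pp_def\<close>)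
  then show ?thesis using less by simp
next
  case greater
  have "((\<lambda>v. v^2) has_field_derivative 2 * u) (at u)"
    by (auto intro!: derivative_eq_intros)
  then have "(pp has_field_derivative 2 * u) (at u)"
    by (rule has_field_derivative_transform_within_open[where S="{0<..}"]) (use greater in \<open>auto simp: pp_def\<close>)
  then show ?thesis using greater by simp
next
  case equal
  have "((\<lambda>y. (pp y - pp 0) / (y - 0)) \<longlongrightarrow> 0) (at 0)"
  proof (rule Lim_null_comparison)
    show "\<forall>\<^sub>F x in at 0. norm ((pp x - pp 0) / (x - 0)) \<le> \<bar>x\<bar>"
      by (intro always_eventually allI) (auto simp: pp_def power2_eq_square abs_mult max_def)
    show "((\<lambda>x. \<bar>x\<bar>) \<longlongrightarrow> 0) (at (0::real))"
      using tendsto_rabs_zero[OF tendsto_ident_at[of 0 UNIV]] by simp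
  qed
  then show ?thesis using equal by (simp add: has_field_derivative_iff)
qed

lemma pp_cont: "continuous_on UNIV pp"
  unfolding pp_def by (intro continuous_intros)

lemma pp_nonneg: "pp u \<ge> 0" by (simp add: pp_def)

lemma pp_pos: "pp u + pp (1 - u) > 0"
  by (cases "u > 0") (auto simp: pp_def max_def add_pos_nonneg add_nonneg_pos)

lemma pp_ne[simp]: "pp u + pp (1 - u) \<noteq> 0"
  using pp_pos[of u] by linarith

definition Sst :: "real \<Rightarrow> real" where "Sst u = pp u / (pp u + pp (1 - u))"

definition Sst' :: "real \<Rightarrow> real" where
  "Sst' u = ((2 * max 0 u) * (pp u + pp (1 - u)) - ((2 * max 0 u - 2 * max 0 (1 - u)) * pp u))
            / ((pp u + pp (1 - u)) ^ Suc (Suc 0))"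

lemma Sst_deriv: "DERIV Sst u :> Sst' u"
proof -
  have d2: "DERIV (\<lambda>u. pp (1 - u)) u :> 2 * max 0 (1 - u) * (- 1)"
    by (rule DERIV_chain2[OF pp_deriv]) (auto intro!: derivative_eq_intros)
  have "DERIV (\<lambda>u. pp u / (pp u + pp (1 - u))) u :> Sst' u"
    unfolding Sst'_def
    using DERIV_quotient[OF pp_deriv DERIV_add[OF pp_deriv d2]] pp_pos[of u]
    by (simp add: algebra_simps)
  then show ?thesis unfolding Sst_def[abs_def] .
qed

lemma Sst_cont: "continuous_on UNIV Sst'"
  unfolding Sst'_def
  by (intro continuous_intros continuous_on_compose2[OF pp_cont]) auto

lemma Sst_le0: "u \<le> 0 \<Longrightarrow> Sst u = 0" by (simp add: Sst_def pp_def)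
lemma Sst_ge1: "u \<ge> 1 \<Longrightarrow> Sst u = 1" using pp_pos[of u] by (simp add: Sst_def pp_def max_def)
lemma Sst'_le0: "u \<le> 0 \<Longrightarrow> Sst' u = 0" by (simp add: Sst'_def pp_def)
lemma Sst'_ge1: "u \<ge> 1 \<Longrightarrow> Sst' u = 0" by (simp add: Sst'_def pp_def max_def)
lemma Sst_bounds: "0 \<le> Sst u" "Sst u \<le> 1"
  using pp_pos[of u] pp_nonneg[of u] pp_nonneg[of "1-u"] by (auto simp: Sst_def divide_le_eq_1)

definition chi :: "real \<Rightarrow> real" where "chi y = Sst (y + 2) * Sst (2 - y)"
definition chi' :: "real \<Rightarrow> real" where "chi' y = Sst' (y + 2) * Sst (2 - y) - Sst (y + 2) * Sst' (2 - y)"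

lemma chi_deriv: "DERIV chi y :> chi' y"
proof -
  have a: "DERIV (\<lambda>y. Sst (y + 2)) y :> Sst' (y + 2) * 1"
    by (rule DERIV_chain2[OF Sst_deriv]) (auto intro!: derivative_eq_intros)
  have b: "DERIV (\<lambda>y. Sst (2 - y)) y :> Sst' (2 - y) * (-1)"
    by (rule DERIV_chain2[OF Sst_deriv]) (auto intro!: derivative_eq_intros)
  show ?thesis unfolding chi_def[abs_def] chi'_def
    using DERIV_mult[OF a b] by (simp add: algebra_simps)
qed

lemma Sst_contf: "continuous_on UNIV Sst"
  unfolding Sst_def[abs_def]
  by (intro continuous_intros continuous_on_compose2[OF pp_cont]) auto

lemma chi_cont: "continuous_on UNIV chi" "continuous_on UNIV chi'"
  unfolding chi_def[abs_def] chi'_def[abs_def]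
  by (intro continuous_intros continuous_on_compose2[OF Sst_contf] continuous_on_compose2[OF Sst_cont]; simp)+

lemma chi_one: "\<bar>y\<bar> \<le> 1 \<Longrightarrow> chi y = 1" by (simp add: chi_def Sst_ge1)
lemma chi'_one: "\<bar>y\<bar> \<le> 1 \<Longrightarrow> chi' y = 0" by (simp add: chi'_def Sst'_ge1)
lemma chi_zero: "\<bar>y\<bar> \<ge> 2 \<Longrightarrow> chi y = 0" by (auto simp: chi_def Sst_le0 abs_if split: if_splits)
lemma chi'_zero: "\<bar>y\<bar> \<ge> 2 \<Longrightarrow> chi' y = 0" by (auto simp: chi'_def Sst_le0 Sst'_le0 abs_if split: if_splits)
lemma chi_bounds: "0 \<le> chi y" "chi y \<le> 1"
  using Sst_bounds[of "y+2"] Sst_bounds[of "2-y"] by (auto simp: chi_def mult_le_one)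

lemma chi'_bounded: "\<exists>K\<ge>0. \<forall>y. \<bar>chi' y\<bar> \<le> K"
proof -
  have "compact (chi' ` {-2..2})"
    by (rule compact_continuous_image[OF continuous_on_subset[OF chi_cont(2)]]) auto
  then obtain K where K: "\<And>z. z \<in> chi' ` {-2..2} \<Longrightarrow> norm z \<le> K"
    using compact_imp_bounded bounded_iff by metis
  have "\<bar>chi' y\<bar> \<le> max 0 K" for y
  proof (cases "\<bar>y\<bar> \<ge> 2")
    case True then show ?thesis by (simp add: chi'_zero)
  next
    case False then have "y \<in> {-2..2}" by auto
    then show ?thesis using K[of "chi' y"] by auto
  qed
  then show ?thesis by (intro exI[of _ "max 0 K"]) auto
qed


lemma C1_prod3:
  fixes a b c a' b' c' :: "real \<Rightarrow> real"
  assumes da: "\<And>t. DERIV a t :> a' t" and db: "\<And>t. DERIV b t :> b' t" and dc: "\<And>t. DERIV c t :> c' t"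
    and ca: "continuous_on UNIV a'" and cb: "continuous_on UNIV b'" and cc: "continuous_on UNIV c'"
  shows "C1 (\<lambda>z::real \<times> (real \<times> real). a (fst z) * b (fst (snd z)) * c (snd (snd z)))"
proof -
  have ca0: "continuous_on UNIV a" using da by (intro continuous_at_imp_continuous_on ballI DERIV_isCont) auto
  have cb0: "continuous_on UNIV b" using db by (intro continuous_at_imp_continuous_on ballI DERIV_isCont) auto
  have cc0: "continuous_on UNIV c" using dc by (intro continuous_at_imp_continuous_on ballI DERIV_isCont) auto
  have bl1: "bounded_linear (\<lambda>h::real \<times> (real \<times> real). fst h)" by (rule bounded_linear_fst)
  have bl2: "bounded_linear (\<lambda>h::real \<times> (real \<times> real). fst (snd h))"
    by (rule bounded_linear_compose[OF bounded_linear_fst bounded_linear_snd])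
  have bl3: "bounded_linear (\<lambda>h::real \<times> (real \<times> real). snd (snd h))"
    by (rule bounded_linear_compose[OF bounded_linear_snd bounded_linear_snd])
  define P1 :: "(real \<times> (real \<times> real)) \<Rightarrow>\<^sub>L real" where "P1 = Blinfun (\<lambda>h. fst h)"
  define P2 :: "(real \<times> (real \<times> real)) \<Rightarrow>\<^sub>L real" where "P2 = Blinfun (\<lambda>h. fst (snd h))"
  define P3 :: "(real \<times> (real \<times> real)) \<Rightarrow>\<^sub>L real" where "P3 = Blinfun (\<lambda>h. snd (snd h))"
  have P: "blinfun_apply P1 = (\<lambda>h. fst h)" "blinfun_apply P2 = (\<lambda>h. fst (snd h))"
    "blinfun_apply P3 = (\<lambda>h. snd (snd h))"
    unfolding P1_def P2_def P3_def using bl1 bl2 bl3 by (simp_all add: bounded_linear_Blinfun_apply)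
  define Df where "Df z = (a' (fst z) * b (fst (snd z)) * c (snd (snd z))) *\<^sub>R P1
      + (a (fst z) * b' (fst (snd z)) * c (snd (snd z))) *\<^sub>R P2
      + (a (fst z) * b (fst (snd z)) * c' (snd (snd z))) *\<^sub>R P3" for z
  have der: "((\<lambda>z::real \<times> (real \<times> real). a (fst z) * b (fst (snd z)) * c (snd (snd z)))
      has_derivative blinfun_apply (Df z)) (at z)" for z
  proof -
    have ha: "((\<lambda>z::real \<times> (real \<times> real). a (fst z)) has_derivative (\<lambda>h. fst h * a' (fst z))) (at z)"
      by (rule DERIV_compose_FDERIV[OF da]) (rule has_derivative_fst[OF has_derivative_ident])
    have hb: "((\<lambda>z::real \<times> (real \<times> real). b (fst (snd z))) has_derivative (\<lambda>h. fst (snd h) * b' (fst (snd z)))) (at z)"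
      by (rule DERIV_compose_FDERIV[OF db]) (rule has_derivative_fst[OF has_derivative_snd[OF has_derivative_ident]])
    have hc: "((\<lambda>z::real \<times> (real \<times> real). c (snd (snd z))) has_derivative (\<lambda>h. snd (snd h) * c' (snd (snd z)))) (at z)"
      by (rule DERIV_compose_FDERIV[OF dc]) (rule has_derivative_snd[OF has_derivative_snd[OF has_derivative_ident]])
    show ?thesis
      by (rule has_derivative_eq_rhs[OF has_derivative_mult[OF has_derivative_mult[OF ha hb] hc]])
         (simp add: Df_def P blinfun.add_left blinfun.scaleR_left fun_eq_iff algebra_simps)
  qed
  have cont: "continuous_on UNIV Df"
    unfolding Df_def[abs_def]
    by (intro continuous_intros continuous_on_compose2[OF ca] continuous_on_compose2[OF cb]
        continuous_on_compose2[OF cc] continuous_on_compose2[OF ca0] continuous_on_compose2[OF cb0]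
        continuous_on_compose2[OF cc0]; simp)
  show ?thesis unfolding C1_def using der cont by blast
qed

lemma tsupport_compactI:
  fixes \<phi> :: "'a::euclidean_space \<Rightarrow> real"
  assumes "bounded K" "\<And>z. \<phi> z \<noteq> 0 \<Longrightarrow> z \<in> K"
  shows "compact (tsupport \<phi>)"
proof -
  have "bounded {p. \<phi> p \<noteq> 0}" using assms by (auto intro: bounded_subset)
  then show ?thesis unfolding tsupport_def by simp
qed

definition bR :: "real \<Rightarrow> real \<Rightarrow> real" where "bR R x = x * chi (x / R)"
definition bR' :: "real \<Rightarrow> real \<Rightarrow> real" where "bR' R x = chi (x / R) + x / R * chi' (x / R)"

lemma bR_deriv: "DERIV (bR R) x :> bR' R x"
proof -
  have "DERIV (\<lambda>x. x * (1/R)) x :> 1 * (1/R)" by (rule DERIV_cmult_right[OF DERIV_ident])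
  from DERIV_chain2[OF chi_deriv this]
  have "DERIV (\<lambda>x. chi (x / R)) x :> chi' (x / R) * (1 / R)" by simp
  from DERIV_mult[OF DERIV_ident this] show ?thesis
    unfolding bR_def[abs_def] bR'_def by (simp add: algebra_simps)
qed

lemma bR'_cont: "continuous_on UNIV (bR' R)"
  unfolding bR'_def[abs_def] divide_inverse
  by (intro continuous_intros continuous_on_compose2[OF chi_cont(1)] continuous_on_compose2[OF chi_cont(2)]; simp)

lemma chi_scaled_cont: "continuous_on UNIV (\<lambda>x. chi (x / R))"
  unfolding divide_inverse by (intro continuous_on_compose2[OF chi_cont(1)] continuous_intros) auto

definition aT :: "real \<Rightarrow> real \<Rightarrow> real" where "aT T t = Sst (t + 1) * Sst (T + 1 - t)"
definition aT' :: "real \<Rightarrow> real \<Rightarrow> real" where "aT' T t = Sst' (t + 1) * Sst (T + 1 - t) - Sst (t + 1) * Sst' (T + 1 - t)"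

lemma aT_deriv: "DERIV (aT T) t :> aT' T t"
proof -
  have a: "DERIV (\<lambda>y. Sst (y + 1)) t :> Sst' (t + 1) * 1"
    by (rule DERIV_chain2[OF Sst_deriv]) (auto intro!: derivative_eq_intros)
  have b: "DERIV (\<lambda>y. Sst (T + 1 - y)) t :> Sst' (T + 1 - t) * (-1)"
    by (rule DERIV_chain2[OF Sst_deriv]) (auto intro!: derivative_eq_intros)
  show ?thesis unfolding aT_def[abs_def] aT'_def
    using DERIV_mult[OF a b] by (simp add: algebra_simps)
qed

lemma aT'_cont: "continuous_on UNIV (aT' T)"
  unfolding aT'_def[abs_def]
  by (intro continuous_intros continuous_on_compose2[OF Sst_contf] continuous_on_compose2[OF Sst_cont]; simp)

lemma aT_one: "0 \<le> t \<Longrightarrow> t \<le> T \<Longrightarrow> aT T t = 1" by (simp add: aT_def Sst_ge1)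
lemma aT'_zero: "0 \<le> t \<Longrightarrow> t \<le> T \<Longrightarrow> aT' T t = 0" by (simp add: aT'_def Sst'_ge1)
lemma aT_supp: assumes "aT T t \<noteq> 0" shows "t \<in> {-1..T+1}"
proof -
  have "Sst (t+1) \<noteq> 0" "Sst (T+1-t) \<noteq> 0" using assms by (auto simp: aT_def)
  then show ?thesis using Sst_le0[of "t+1"] Sst_le0[of "T+1-t"] by force
qed

lemma chi_supp: "chi y \<noteq> 0 \<Longrightarrow> \<bar>y\<bar> \<le> 2"
  using chi_zero[of y] by (cases "\<bar>y\<bar> \<ge> 2") auto

lemma chi'_supp: "chi' y \<noteq> 0 \<Longrightarrow> \<bar>y\<bar> \<le> 2"
  using chi'_zero[of y] by (cases "\<bar>y\<bar> \<ge> 2") auto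

lemma bR'_bound:
  assumes K: "\<And>y. \<bar>chi' y\<bar> \<le> K" and R: "R > 0"
  shows "\<bar>bR' R x\<bar> \<le> 1 + 2 * K"
proof (cases "\<bar>x / R\<bar> \<ge> 2")
  case True then show ?thesis using K[of 0] by (simp add: bR'_def chi_zero chi'_zero)
next
  case False
  have "\<bar>x / R * chi' (x / R)\<bar> \<le> 2 * K"
    unfolding abs_mult using False K[of "x/R"] by (intro mult_mono) auto
  moreover have "\<bar>chi (x / R)\<bar> \<le> 1" using chi_bounds[of "x/R"] by simp
  ultimately show ?thesis unfolding bR'_def by linarith
qed

lemma bR_bound: "\<bar>bR R x\<bar> \<le> \<bar>x\<bar>"
  using chi_bounds[of "x/R"] by (simp add: bR_def abs_mult mult_left_le)

lemma bR_eventually: "eventually (\<lambda>n. bR (real (Suc n)) x = x \<and> bR' (real (Suc n)) x = 1) sequentially"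
proof -
  obtain N :: nat where N: "\<bar>x\<bar> \<le> real N" using real_arch_simple by blast
  show ?thesis
  proof (rule eventually_sequentiallyI[of N])
    fix n assume "N \<le> n"
    then have le: "\<bar>x\<bar> \<le> real (Suc n)" using N by linarith
    then have "\<bar>x / real (Suc n)\<bar> \<le> 1" by (simp add: divide_le_eq_1)
    then show "bR (real (Suc n)) x = x \<and> bR' (real (Suc n)) x = 1"
      by (simp add: bR_def bR'_def chi_one chi'_one)
  qed
qed


lemma int_diff_bound:
  fixes f g :: "'a \<Rightarrow> real"
  assumes P: "prob_space M" and f: "integrable M f" and g: "integrable M g"
    and b: "AE x in M. \<bar>f x - g x\<bar> \<le> c"
  shows "\<bar>(\<integral>x. f x \<partial>M) - (\<integral>x. g x \<partial>M)\<bar> \<le> c"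
proof -
  interpret prob_space M by (rule P)
  have "(\<integral>x. f x \<partial>M) - (\<integral>x. g x \<partial>M) = (\<integral>x. f x - g x \<partial>M)" using f g by simp
  also have "\<bar>\<dots>\<bar> \<le> (\<integral>x. \<bar>f x - g x\<bar> \<partial>M)"
    using integral_norm_bound[of M "\<lambda>x. f x - g x"] by simp
  also have "\<dots> \<le> (\<integral>x. c \<partial>M)"
    by (rule integral_mono_AE) (use f g b in auto)
  also have "\<dots> = c" by (simp add: prob_space)
  finally show ?thesis .
qed

lemma cont_generic:
  fixes \<mu> :: "real \<Rightarrow> (real \<times> real) measure" and k :: "real \<Rightarrow> real \<times> real \<Rightarrow> real"
    and W :: "real \<Rightarrow> real"
  assumes t: "t \<ge> 0"
    and Wlim: "(W \<longlongrightarrow> 0) (at t within {0..})"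
    and prob: "\<And>s. s \<ge> 0 \<Longrightarrow> prob_space (\<mu> s)"
    and int1: "\<And>s. s \<ge> 0 \<Longrightarrow> integrable (\<mu> s) (k s)"
    and int2: "\<And>s. s \<ge> 0 \<Longrightarrow> integrable (\<mu> s) (k t)"
    and bnd: "\<And>s. s \<ge> 0 \<Longrightarrow> AE p in \<mu> s. \<bar>k s p - k t p\<bar> \<le> c * W s"
    and lim: "((\<lambda>s. \<integral>p. k t p \<partial>\<mu> s) \<longlongrightarrow> (\<integral>p. k t p \<partial>\<mu> t)) (at t within {0..})"
  shows "((\<lambda>s. \<integral>p. k s p \<partial>\<mu> s) \<longlongrightarrow> (\<integral>p. k t p \<partial>\<mu> t)) (at t within {0..})"
proof -
  have ev: "eventually (\<lambda>s. norm ((\<integral>p. k s p \<partial>\<mu> s) - (\<integral>p. k t p \<partial>\<mu> s)) \<le> c * W s) (at t within {0..})"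
    unfolding eventually_at_filter
    by (intro always_eventually allI impI) (auto intro!: int_diff_bound prob int1 int2 bnd)
  have "(\<lambda>s. c * W s) \<midarrow>t\<rightarrow> 0" if False using that by simp
  have "((\<lambda>s. c * W s) \<longlongrightarrow> 0) (at t within {0..})"
    using tendsto_mult_right_zero[OF Wlim, of c] by simp
  then have "((\<lambda>s. (\<integral>p. k s p \<partial>\<mu> s) - (\<integral>p. k t p \<partial>\<mu> s)) \<longlongrightarrow> 0) (at t within {0..})"
    by (rule Lim_null_comparison[OF ev])
  from tendsto_add[OF this lim] show ?thesis by simp
qed

lemma dirac_prod:
  fixes \<nu> :: "real measure" and c :: real
  assumes P: "prob_space \<nu>" and S: "sets \<nu> = sets borel" and m: "integrable \<nu> (\<lambda>w. w^2)"
  shows "return borel c \<Otimes>\<^sub>M \<nu> \<in> couplings (return borel c) \<nu>"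
    "return borel c \<Otimes>\<^sub>M \<nu> \<in> P2nu \<nu>"
    "AE p in return borel c \<Otimes>\<^sub>M \<nu>. fst p = c"
proof -
  let ?R = "return borel c" and ?m = "return borel c \<Otimes>\<^sub>M \<nu>"
  have PR: "prob_space ?R" by (rule prob_space_return) simp
  show cp: "?m \<in> couplings ?R \<nu>" by (rule prod_coupling[OF PR P _ S]) simp
  note C = couplingD[OF cp]
  have sq: "(\<lambda>x::real. x^2) \<in> borel_measurable borel" by measurable
  have AR: "AE x in ?R. x^2 = c^2" by (subst AE_return) auto
  have iR: "integrable ?R (\<lambda>x::real. x^2)"
  proof -
    interpret prob_space ?R by (rule PR)
    have "integrable ?R (\<lambda>x::real. c^2)" by simp
    then show ?thesis using integrable_cong_AE[of "\<lambda>x::real. x^2" ?R "\<lambda>x. c^2"] AR by simp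
  qed
  have i1: "integrable ?m (\<lambda>z. (fst z)^2)" using coupling_fst(1)[OF cp sq] iR by simp
  have i2: "integrable ?m (\<lambda>z. (snd z)^2)" using coupling_snd(1)[OF cp sq] m by simp
  have nrm: "(norm z)^2 = (fst z)^2 + (snd z)^2" for z :: "real \<times> real"
    by (cases z) (simp add: norm_Pair)
  have "integrable ?m (\<lambda>z. (norm z)^2)" unfolding nrm using i1 i2 by simp
  then show "?m \<in> P2nu \<nu>" using C by (simp add: P2nu_def P2_def)
  have mf: "fst \<in> measurable ?m borel"
    using measurable_fst[of "borel::real measure" "borel::real measure"]
    by (simp add: measurable_cong_sets[OF C(2) refl] borel_prod)
  have "AE x in distr ?m borel fst. x = c" unfolding C(3) by (subst AE_return) auto
  then show "AE p in ?m. fst p = c" by (subst (asm) AE_distr_iff[OF mf]) auto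
qed


lemma chiR_deriv: "DERIV (\<lambda>x. chi (x / R)) x :> chi' (x / R) * (1 / R)"
proof -
  have "DERIV (\<lambda>x. x * (1/R)) x :> 1 * (1/R)" by (rule DERIV_cmult_right[OF DERIV_ident])
  from DERIV_chain2[OF chi_deriv this] show ?thesis by simp
qed

lemma chiR'_cont: "continuous_on UNIV (\<lambda>x. chi' (x / R) * (1 / R))"
  unfolding divide_inverse by (intro continuous_intros continuous_on_compose2[OF chi_cont(2)]) auto

lemma abs_lip: "\<bar>\<bar>a\<bar> - \<bar>b\<bar>\<bar> \<le> \<bar>a - b :: real\<bar>" by linarith

theorem lemma2p4:
  fixes \<nu> :: "real measure"
    and F :: "(real \<times> real) measure \<Rightarrow> real \<Rightarrow> real \<Rightarrow> real"
    and \<mu> :: "real \<Rightarrow> (real \<times> real) measure"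
    and A B I M \<kappa> :: real
  defines "\<Omega> \<equiv> msupport \<nu>"
    and "\<gamma> \<equiv> Sup {\<bar>w - w'\<bar> | w w'. w \<in> msupport \<nu> \<and> w' \<in> msupport \<nu>}"
    and "\<omega>c \<equiv> \<integral>w. w \<partial>\<nu>"
    and "xc \<equiv> (\<lambda>t. \<integral>p. fst p \<partial>(\<mu> t))"
    and "\<mu>t \<equiv> (\<lambda>t. return borel (\<integral>p. fst p \<partial>(\<mu> t)) \<Otimes>\<^sub>M \<nu>)"
  assumes nu_prob: "prob_space \<nu>" and nu_sets: "sets \<nu> = sets borel"
    and nu_mom: "integrable \<nu> (\<lambda>w. w ^ 2)" and nu_bdd: "bounded \<Omega>"
    and pos: "A > 0" "B > 0" "I > 0" "M > 0" "\<kappa> > 0"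
    and A1_0: "\<And>m m' x w. m \<in> P2nu \<nu> \<Longrightarrow> m' \<in> P2nu \<nu> \<Longrightarrow> w \<in> \<Omega> \<Longrightarrow>
                 \<bar>F m x w - F m' x w\<bar> \<le> \<kappa> * M * W1 m m'"
    and A1_1: "\<And>m m' x w. m \<in> P2nu \<nu> \<Longrightarrow> m' \<in> P2nu \<nu> \<Longrightarrow> w \<in> \<Omega> \<Longrightarrow>
                 \<bar>pdx (F m) x w - pdx (F m') x w\<bar> \<le> \<kappa> * M * W1 m m'"
    and A2_C2: "\<And>m. m \<in> P2nu \<nu> \<Longrightarrow> C2 (\<lambda>p. F m (fst p) (snd p))"
    and A2_x: "\<And>m x w. m \<in> P2nu \<nu> \<Longrightarrow> \<bar>pdx (F m) x w\<bar> \<le> \<kappa> * I"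
    and A2_xx: "\<And>m x w. m \<in> P2nu \<nu> \<Longrightarrow> \<bar>pdx (pdx (F m)) x w\<bar> \<le> \<kappa> * I"
    and A2_w: "\<And>m x w. m \<in> P2nu \<nu> \<Longrightarrow> \<bar>pdw (F m) x w\<bar> \<le> I"
    and A3: "\<And>m x w. m \<in> P2nu \<nu> \<Longrightarrow>
               F (distr m borel (\<lambda>p. (fst p + 2 * pi, snd p))) (x + 2 * pi) w = F m x w"
    and A4: "\<And>x. F (return borel x \<Otimes>\<^sub>M \<nu>) x \<omega>c \<ge> A"
    and A5: "integral {0..2 * pi}
               (\<lambda>x. pdx (F (return borel x \<Otimes>\<^sub>M \<nu>)) x \<omega>c / F (return borel x \<Otimes>\<^sub>M \<nu>) x \<omega>c)
             \<le> - \<kappa> * B"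
    and sol: "mvsol F \<nu> \<mu>"
  shows "\<forall>t\<ge>0. \<exists>D. (xc has_real_derivative D) (at t within {0..}) \<and>
           \<bar>D - F (\<mu>t t) (xc t) \<omega>c\<bar> \<le> ((\<kappa> + 1) * I + \<kappa> * M) * W1 (\<mu> t) (\<mu>t t) + I * \<gamma>"
proof -
  interpret nu: prob_space \<nu> by (rule nu_prob)
  have Ocl: "closed \<Omega>" and AEO: "AE w in \<nu>. w \<in> \<Omega>"
    using msupport_facts[OF nu_sets] unfolding \<Omega>_def by auto
  obtain R0 where R0: "R0 > 0" "\<And>w. w \<in> \<Omega> \<Longrightarrow> \<bar>w\<bar> \<le> R0"
  proof -
    obtain a where a: "\<And>w. w \<in> \<Omega> \<Longrightarrow> norm w \<le> a" using nu_bdd unfolding bounded_iff by blast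
    show ?thesis by (rule that[of "max 1 a"]) (use a in force)+
  qed
  have One: "\<Omega> \<noteq> {}"
  proof
    assume "\<Omega> = {}"
    then have "AE w in \<nu>. False" using AEO by simp
    then show False by simp
  qed
  then obtain \<omega>0 where \<omega>0: "\<omega>0 \<in> \<Omega>" by blast
  have muP: "\<And>s. s \<ge> 0 \<Longrightarrow> \<mu> s \<in> P2nu \<nu>" using sol by (simp add: mvsol_def)
  have muP2: "\<And>s. s \<ge> 0 \<Longrightarrow> \<mu> s \<in> P2" using muP by (simp add: P2nu_def)
  have muprob: "\<And>s. s \<ge> 0 \<Longrightarrow> prob_space (\<mu> s)" using P2D(1)[OF muP2] .
  have musets: "\<And>s. s \<ge> 0 \<Longrightarrow> sets (\<mu> s) = sets borel" using P2D(2)[OF muP2] .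
  have muAE: "AE p in \<mu> s. snd p \<in> \<Omega>" if s: "s \<ge> 0" for s
  proof -
    have d: "distr (\<mu> s) borel snd = \<nu>" using muP[OF s] by (simp add: P2nu_def)
    have ms: "snd \<in> measurable (\<mu> s) borel"
      using measurable_snd[of "borel::real measure" "borel::real measure"]
      by (simp add: measurable_cong_sets[OF musets[OF s] refl] borel_prod)
    have "AE w in distr (\<mu> s) borel snd. w \<in> \<Omega>" unfolding d by (rule AEO)
    moreover have "{x \<in> space borel. x \<in> \<Omega>} \<in> sets borel" using Ocl by simp
    ultimately show ?thesis by (simp add: AE_distr_iff[OF ms])
  qed
  define L where "L = \<kappa> * I + I"
  have L0: "L \<ge> 0" using pos by (simp add: L_def)
  have Fcont: "\<And>m. m \<in> P2nu \<nu> \<Longrightarrow> continuous_on UNIV (\<lambda>p. F m (fst p) (snd p))"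
    using C2_partials(1)[OF A2_C2] .
  have Flip: "\<And>m p q. m \<in> P2nu \<nu> \<Longrightarrow> \<bar>F m (fst p) (snd p) - F m (fst q) (snd q)\<bar> \<le> L * dist p q"
    unfolding L_def by (rule C2_lip(2)[OF A2_C2 A2_x A2_w])
  have Flip1: "\<And>m x w x' w'. m \<in> P2nu \<nu> \<Longrightarrow> \<bar>F m x w - F m x' w'\<bar> \<le> \<kappa> * I * \<bar>x - x'\<bar> + I * \<bar>w - w'\<bar>"
    by (rule C2_lip(1)[OF A2_C2 A2_x A2_w])
  have Fint: "\<And>m m'. m \<in> P2nu \<nu> \<Longrightarrow> m' \<in> P2 \<Longrightarrow> integrable m' (\<lambda>p. F m (fst p) (snd p))"
    by (rule lip_integrable[OF _ Fcont Flip])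
  have Facont: "\<And>m. m \<in> P2nu \<nu> \<Longrightarrow> continuous_on UNIV (\<lambda>p. \<bar>F m (fst p) (snd p)\<bar>)"
    by (intro continuous_on_rabs Fcont)
  have Falip: "\<And>m p q. m \<in> P2nu \<nu> \<Longrightarrow> \<bar>\<bar>F m (fst p) (snd p)\<bar> - \<bar>F m (fst q) (snd q)\<bar>\<bar> \<le> L * dist p q"
    by (rule order.trans[OF abs_lip Flip])
  have Faint: "\<And>m m'. m \<in> P2nu \<nu> \<Longrightarrow> m' \<in> P2 \<Longrightarrow> integrable m' (\<lambda>p. \<bar>F m (fst p) (snd p)\<bar>)"
    by (rule lip_integrable[OF _ Facont Falip])
  have W1lim: "((\<lambda>s. W1 (\<mu> s) (\<mu> t)) \<longlongrightarrow> 0) (at t within {0..})" if t: "t \<ge> 0" for t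
  proof -
    have w2: "((\<lambda>s. wasserstein 2 (\<mu> s) (\<mu> t)) \<longlongrightarrow> 0) (at t within {0..})"
      using sol t by (simp add: mvsol_def)
    show ?thesis
    proof (rule tendstoI)
      fix e :: real assume e: "e > 0"
      have "eventually (\<lambda>s. dist (wasserstein 2 (\<mu> s) (\<mu> t)) 0 < e/2) (at t within {0..})"
        using tendstoD[OF w2, of "e/2"] e by simp
      moreover have "eventually (\<lambda>s. s \<in> {0..}) (at t within {0..})"
        by (simp add: eventually_at_filter)
      ultimately show "eventually (\<lambda>s. dist (W1 (\<mu> s) (\<mu> t)) 0 < e) (at t within {0..})"
      proof eventually_elim
        case (elim s)
        then have "W1 (\<mu> s) (\<mu> t) \<le> e/2"
          by (intro W1_le_W2 muP2 t) (auto simp: dist_real_def)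
        then show ?case using W1_eq(2)[OF muP2 muP2, of s t] elim t e by (simp add: dist_real_def)
      qed
    qed
  qed
  have liplim: "((\<lambda>s. \<integral>p. g p \<partial>\<mu> s) \<longlongrightarrow> (\<integral>p. g p \<partial>\<mu> t)) (at t within {0..})"
    if t: "t \<ge> 0" and gc: "continuous_on UNIV g" and gl: "\<And>p q. \<bar>g p - g q\<bar> \<le> L * dist p q"
    for t and g :: "real \<times> real \<Rightarrow> real"
  proof -
    have ev: "eventually (\<lambda>s. norm ((\<integral>p. g p \<partial>\<mu> s) - (\<integral>p. g p \<partial>\<mu> t)) \<le> L * W1 (\<mu> s) (\<mu> t)) (at t within {0..})"
      unfolding eventually_at_filter
      by (intro always_eventually allI impI)
         (auto intro!: W1_lip muP2 t gc gl L0 lip_integrable[OF _ gc gl])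
    have "((\<lambda>s. L * W1 (\<mu> s) (\<mu> t)) \<longlongrightarrow> 0) (at t within {0..})"
      using tendsto_mult_right_zero[OF W1lim[OF t], of L] by simp
    then have "((\<lambda>s. (\<integral>p. g p \<partial>\<mu> s) - (\<integral>p. g p \<partial>\<mu> t)) \<longlongrightarrow> 0) (at t within {0..})"
      by (rule Lim_null_comparison[OF ev])
    from tendsto_add[OF this tendsto_const[of "\<integral>p. g p \<partial>\<mu> t"]] show ?thesis by simp
  qed
  define G where "G s = (\<integral>p. F (\<mu> s) (fst p) (snd p) \<partial>\<mu> s)" for s
  define A where "A s = (\<integral>p. \<bar>F (\<mu> s) (fst p) (snd p)\<bar> \<partial>\<mu> s)" for s
  have Glim: "(G \<longlongrightarrow> G t) (at t within {0..})" if t: "t \<ge> 0" for t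
    unfolding G_def
  proof (rule cont_generic[where W = "\<lambda>s. W1 (\<mu> s) (\<mu> t)" and c = "\<kappa> * M", OF t W1lim[OF t] muprob])
    show "\<And>s. 0 \<le> s \<Longrightarrow> integrable (\<mu> s) (\<lambda>p. F (\<mu> s) (fst p) (snd p))"
      by (intro Fint muP muP2)
    show "\<And>s. 0 \<le> s \<Longrightarrow> integrable (\<mu> s) (\<lambda>p. F (\<mu> t) (fst p) (snd p))"
      by (intro Fint muP muP2 t)
    show "AE p in \<mu> s. \<bar>F (\<mu> s) (fst p) (snd p) - F (\<mu> t) (fst p) (snd p)\<bar> \<le> \<kappa> * M * W1 (\<mu> s) (\<mu> t)"
      if s: "0 \<le> s" for s
      using muAE[OF s] by eventually_elim (intro A1_0 muP s t)
    show "((\<lambda>s. \<integral>p. F (\<mu> t) (fst p) (snd p) \<partial>\<mu> s) \<longlongrightarrow> (\<integral>p. F (\<mu> t) (fst p) (snd p) \<partial>\<mu> t)) (at t within {0..})"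
      by (rule liplim[OF t Fcont Flip]) (intro muP t)+
  qed
  have Alim: "(A \<longlongrightarrow> A t) (at t within {0..})" if t: "t \<ge> 0" for t
    unfolding A_def
  proof (rule cont_generic[where W = "\<lambda>s. W1 (\<mu> s) (\<mu> t)" and c = "\<kappa> * M", OF t W1lim[OF t] muprob])
    show "\<And>s. 0 \<le> s \<Longrightarrow> integrable (\<mu> s) (\<lambda>p. \<bar>F (\<mu> s) (fst p) (snd p)\<bar>)"
      by (intro Faint muP muP2)
    show "\<And>s. 0 \<le> s \<Longrightarrow> integrable (\<mu> s) (\<lambda>p. \<bar>F (\<mu> t) (fst p) (snd p)\<bar>)"
      by (intro Faint muP muP2 t)
    show "AE p in \<mu> s. \<bar>\<bar>F (\<mu> s) (fst p) (snd p)\<bar> - \<bar>F (\<mu> t) (fst p) (snd p)\<bar>\<bar> \<le> \<kappa> * M * W1 (\<mu> s) (\<mu> t)"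
      if s: "0 \<le> s" for s
      using muAE[OF s] by eventually_elim (rule order.trans[OF abs_lip], intro A1_0 muP s t)
    show "((\<lambda>s. \<integral>p. \<bar>F (\<mu> t) (fst p) (snd p)\<bar> \<partial>\<mu> s) \<longlongrightarrow> (\<integral>p. \<bar>F (\<mu> t) (fst p) (snd p)\<bar> \<partial>\<mu> t)) (at t within {0..})"
      by (rule liplim[OF t Facont Falip]) (intro muP t)+
  qed
  have Gcont: "continuous_on {0..} G"
    unfolding continuous_on_def using Glim by auto
  have Acont: "continuous_on {0..} A"
    unfolding continuous_on_def using Alim by auto
  obtain K where K: "K \<ge> 0" "\<And>y. \<bar>chi' y\<bar> \<le> K" using chi'_bounded by blast
  define C where "C = 1 + 2 * K"
  have C0: "C \<ge> 0" using K by (simp add: C_def)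
  define Rn where "Rn n = real (Suc n)" for n
  have Rn0: "Rn n > 0" for n by (simp add: Rn_def)
  define \<psi> where "\<psi> n p = bR' (Rn n) (fst p) * chi (snd p / R0)" for n and p :: "real \<times> real"
  have \<psi>b: "\<bar>\<psi> n p\<bar> \<le> C" for n p
  proof -
    have "\<bar>\<psi> n p\<bar> \<le> C * 1" unfolding \<psi>_def abs_mult C_def
      using bR'_bound[OF K(2) Rn0] chi_bounds[of "snd p / R0"] K by (intro mult_mono) auto
    then show ?thesis by simp
  qed
  have \<psi>cont: "continuous_on UNIV (\<psi> n)" for n
    unfolding \<psi>_def[abs_def]
    by (intro continuous_intros continuous_on_compose2[OF bR'_cont] continuous_on_compose2[OF chi_scaled_cont]) auto
  have \<psi>supp: "\<psi> n p \<noteq> 0 \<Longrightarrow> p \<in> {-2 * Rn n..2 * Rn n} \<times> {-2 * R0..2 * R0}" for n p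
  proof -
    assume a: "\<psi> n p \<noteq> 0"
    then have "bR' (Rn n) (fst p) \<noteq> 0" "chi (snd p / R0) \<noteq> 0" by (auto simp: \<psi>_def)
    then have "\<bar>fst p / Rn n\<bar> \<le> 2" "\<bar>snd p / R0\<bar> \<le> 2"
      using chi_supp chi'_supp unfolding bR'_def by (metis add.right_neutral mult_zero_right)+
    then show ?thesis using Rn0[of n] R0(1) by (cases p) (auto simp: abs_le_iff divide_le_eq le_divide_eq)
  qed
  have \<psi>one: "eventually (\<lambda>n. \<psi> n p = 1) sequentially" if "snd p \<in> \<Omega>" for p
  proof -
    have "\<bar>snd p / R0\<bar> \<le> 1" using R0 that by (simp add: divide_le_eq_1 abs_div)
    then have "chi (snd p / R0) = 1" by (rule chi_one)
    then show ?thesis using bR_eventually[of "fst p"] unfolding \<psi>_def Rn_def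
      by (elim eventually_mono) auto
  qed
  have FPint: "integrable m' (\<lambda>p. F m (fst p) (snd p) * \<psi> n p)" if "m \<in> P2nu \<nu>" "m' \<in> P2" for m m' n
  proof (rule Bochner_Integration.integrable_bound[OF integrable_mult_right[OF Fint[OF that], of C]])
    show "(\<lambda>p. F m (fst p) (snd p) * \<psi> n p) \<in> borel_measurable m'"
      using borel_measurable_continuous_onI[OF continuous_on_mult[OF Fcont[OF that(1)] \<psi>cont]]
      by (simp add: measurable_cong_sets[OF P2D(2)[OF that(2)] refl])
    show "AE x in m'. norm (F m (fst x) (snd x) * \<psi> n x) \<le> norm (C * F m (fst x) (snd x))"
    proof (intro AE_I2)
      fix x
      have "\<bar>F m (fst x) (snd x)\<bar> * \<bar>\<psi> n x\<bar> \<le> \<bar>F m (fst x) (snd x)\<bar> * C"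
        by (rule mult_left_mono[OF \<psi>b abs_ge_zero])
      then show "norm (F m (fst x) (snd x) * \<psi> n x) \<le> norm (C * F m (fst x) (snd x))"
        using C0 by (simp add: abs_mult mult.commute)
    qed
  qed
  define H where "H n s = (\<integral>p. F (\<mu> s) (fst p) (snd p) * \<psi> n p \<partial>\<mu> s)" for n s
  have Hlim: "(H n \<longlongrightarrow> H n t) (at t within {0..})" if t: "t \<ge> 0" for t n
    unfolding H_def
  proof (rule cont_generic[where W = "\<lambda>s. W1 (\<mu> s) (\<mu> t)" and c = "C * (\<kappa> * M)", OF t W1lim[OF t] muprob])
    show "\<And>s. 0 \<le> s \<Longrightarrow> integrable (\<mu> s) (\<lambda>p. F (\<mu> s) (fst p) (snd p) * \<psi> n p)"
      by (intro FPint muP muP2)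
    show "\<And>s. 0 \<le> s \<Longrightarrow> integrable (\<mu> s) (\<lambda>p. F (\<mu> t) (fst p) (snd p) * \<psi> n p)"
      by (intro FPint muP muP2 t)
    show "AE p in \<mu> s. \<bar>F (\<mu> s) (fst p) (snd p) * \<psi> n p - F (\<mu> t) (fst p) (snd p) * \<psi> n p\<bar>
        \<le> C * (\<kappa> * M) * W1 (\<mu> s) (\<mu> t)"
      if s: "0 \<le> s" for s
      using muAE[OF s]
    proof eventually_elim
      case (elim p)
      have "\<bar>F (\<mu> s) (fst p) (snd p) * \<psi> n p - F (\<mu> t) (fst p) (snd p) * \<psi> n p\<bar>
          = \<bar>\<psi> n p\<bar> * \<bar>F (\<mu> s) (fst p) (snd p) - F (\<mu> t) (fst p) (snd p)\<bar>"
        by (simp add: abs_mult[symmetric] algebra_simps)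
      also have "\<dots> \<le> C * (\<kappa> * M * W1 (\<mu> s) (\<mu> t))"
        by (intro mult_mono \<psi>b A1_0 muP s t elim C0) simp
      finally show ?case by (simp add: mult.assoc)
    qed
    show "((\<lambda>s. \<integral>p. F (\<mu> t) (fst p) (snd p) * \<psi> n p \<partial>\<mu> s) \<longlongrightarrow> (\<integral>p. F (\<mu> t) (fst p) (snd p) * \<psi> n p \<partial>\<mu> t)) (at t within {0..})"
    proof -
      have c1: "continuous_on UNIV (\<lambda>p. F (\<mu> t) (fst p) (snd p) * \<psi> n p)"
        by (intro continuous_on_mult Fcont muP t \<psi>cont)
      have c2: "compact (tsupport (\<lambda>p. F (\<mu> t) (fst p) (snd p) * \<psi> n p))"
        by (rule tsupport_compactI[of "{-2 * Rn n..2 * Rn n} \<times> {-2 * R0..2 * R0}"])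
           (simp add: bounded_Times, metis mult_zero_right \<psi>supp)
      have "continuous_on {0..} (\<lambda>s. \<integral>p. F (\<mu> t) (fst p) (snd p) * \<psi> n p \<partial>\<mu> s)"
        using sol c1 c2 unfolding mvsol_def by blast
      then show ?thesis using t unfolding continuous_on_def by auto
    qed
  qed
  define \<Phi> where "\<Phi> n \<tau> = (\<integral>p. bR (Rn n) (fst p) * chi (snd p / R0) \<partial>\<mu> \<tau>)" for n \<tau>
  have Eq: "\<Phi> n t = \<Phi> n 0 + integral {0..t} (H n)" if t: "t \<ge> 0" for n t
  proof -
    define \<phi> where "\<phi> z = aT t (fst z) * bR (Rn n) (fst (snd z)) * chi (snd (snd z) / R0)"
      for z :: "real \<times> (real \<times> real)"
    have "C1 (\<lambda>z::real \<times> (real \<times> real). aT t (fst z) * bR (Rn n) (fst (snd z)) * (\<lambda>x. chi (x / R0)) (snd (snd z)))"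
      by (rule C1_prod3[OF aT_deriv bR_deriv chiR_deriv aT'_cont bR'_cont chiR'_cont])
    then have C1\<phi>: "C1 \<phi>" by (simp add: \<phi>_def[abs_def])
    have c\<phi>: "compact (tsupport \<phi>)"
    proof (rule tsupport_compactI[of "{-1..t+1} \<times> ({-2 * Rn n..2 * Rn n} \<times> {-2 * R0..2 * R0})"])
      show "bounded ({-1..t+1} \<times> ({-2 * Rn n..2 * Rn n} \<times> {-2 * R0..2 * R0}))"
        by (simp add: bounded_Times)
      fix z :: "real \<times> (real \<times> real)" assume "\<phi> z \<noteq> 0"
      then have nz: "aT t (fst z) \<noteq> 0" "chi (fst (snd z) / Rn n) \<noteq> 0" "chi (snd (snd z) / R0) \<noteq> 0"
        by (auto simp: \<phi>_def bR_def)
      have "fst z \<in> {-1..t+1}" "\<bar>fst (snd z) / Rn n\<bar> \<le> 2" "\<bar>snd (snd z) / R0\<bar> \<le> 2"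
        using aT_supp[OF nz(1)] chi_supp[OF nz(2)] chi_supp[OF nz(3)] by blast+
      then show "z \<in> {-1..t+1} \<times> ({-2 * Rn n..2 * Rn n} \<times> {-2 * R0..2 * R0})"
        using Rn0[of n] R0(1) by (cases z) (auto simp: abs_le_iff divide_le_eq le_divide_eq)
    qed
    note eq = sol[unfolded mvsol_def, THEN conjunct2, THEN conjunct2, THEN conjunct2, rule_format,
        OF conjI[OF C1\<phi> c\<phi>] t]
    have dt: "deriv (\<lambda>r. \<phi> (r, p)) s = aT' t s * bR (Rn n) (fst p) * chi (snd p / R0)" for s p
      unfolding \<phi>_def fst_conv snd_conv by (intro DERIV_imp_deriv DERIV_cmult_right aT_deriv)
    have dx: "deriv (\<lambda>y. \<phi> (s, (y, w))) x = aT t s * bR' (Rn n) x * chi (w / R0)" for s x w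
      unfolding \<phi>_def fst_conv snd_conv by (intro DERIV_imp_deriv DERIV_cmult_right DERIV_cmult bR_deriv)
    have "integral {0..t} (\<lambda>s. \<integral>p. (deriv (\<lambda>r. \<phi> (r, p)) s
        + F (\<mu> s) (fst p) (snd p) * deriv (\<lambda>y. \<phi> (s, (y, snd p))) (fst p)) \<partial>\<mu> s) = integral {0..t} (H n)"
    proof (rule integral_cong)
      fix s assume s: "s \<in> {0..t}"
      then show "(\<integral>p. (deriv (\<lambda>r. \<phi> (r, p)) s
        + F (\<mu> s) (fst p) (snd p) * deriv (\<lambda>y. \<phi> (s, (y, snd p))) (fst p)) \<partial>\<mu> s) = H n s"
        unfolding H_def \<psi>_def dt dx using aT_one[of s t] aT'_zero[of s t] by simp
    qed
    moreover have "(\<integral>p. \<phi> (t, p) \<partial>\<mu> t) = \<Phi> n t" "(\<integral>p. \<phi> (0, p) \<partial>\<mu> 0) = \<Phi> n 0"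
      unfolding \<phi>_def \<Phi>_def using aT_one[of t t] aT_one[of 0 t] t by simp_all
    ultimately show ?thesis using eq by simp
  qed
  have fstc: "continuous_on UNIV (\<lambda>p::real \<times> real. fst p)" by (intro continuous_intros)
  have fstl: "\<bar>fst p - fst q\<bar> \<le> 1 * dist p q" for p q :: "real \<times> real"
    using dist_fst_le[of p q] by (simp add: dist_real_def)
  have afstc: "continuous_on UNIV (\<lambda>p::real \<times> real. \<bar>fst p\<bar>)" by (intro continuous_intros)
  have afstl: "\<bar>\<bar>fst p\<bar> - \<bar>fst q\<bar>\<bar> \<le> 1 * dist p q" for p q :: "real \<times> real"
    by (rule order.trans[OF abs_lip fstl])
  have bRc: "continuous_on UNIV (\<lambda>p::real \<times> real. bR (Rn i) (fst p) * chi (snd p / R0))" for i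
    unfolding bR_def
    by (intro continuous_intros continuous_on_compose2[OF chi_scaled_cont]) auto
  have \<Phi>lim: "(\<lambda>n. \<Phi> n \<tau>) \<longlonglongrightarrow> xc \<tau>" if \<tau>: "\<tau> \<ge> 0" for \<tau>
  proof -
    have "(\<lambda>n. \<integral>p. bR (Rn n) (fst p) * chi (snd p / R0) \<partial>\<mu> \<tau>) \<longlonglongrightarrow> (\<integral>p. fst p \<partial>\<mu> \<tau>)"
    proof (rule integral_dominated_convergence[where w = "\<lambda>p. \<bar>fst p\<bar>"])
      show "(\<lambda>p. fst p) \<in> borel_measurable (\<mu> \<tau>)"
        using borel_measurable_continuous_onI[OF fstc] by (simp add: measurable_cong_sets[OF musets[OF \<tau>] refl])
      show "(\<lambda>p. bR (Rn i) (fst p) * chi (snd p / R0)) \<in> borel_measurable (\<mu> \<tau>)" for i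
        using borel_measurable_continuous_onI[OF bRc] by (simp add: measurable_cong_sets[OF musets[OF \<tau>] refl])
      show "integrable (\<mu> \<tau>) (\<lambda>p. \<bar>fst p\<bar>)"
        by (rule lip_integrable[OF muP2[OF \<tau>] afstc afstl])
      show "AE p in \<mu> \<tau>. (\<lambda>n. bR (Rn n) (fst p) * chi (snd p / R0)) \<longlonglongrightarrow> fst p"
        using muAE[OF \<tau>]
      proof eventually_elim
        case (elim p)
        have "\<bar>snd p / R0\<bar> \<le> 1" using R0 elim by (simp add: divide_le_eq_1 abs_div)
        then have "chi (snd p / R0) = 1" by (rule chi_one)
        then have "eventually (\<lambda>n. bR (Rn n) (fst p) * chi (snd p / R0) = fst p) sequentially"
          using bR_eventually[of "fst p"] unfolding Rn_def by (elim eventually_mono) auto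
        then show ?case by (rule tendsto_eventually)
      qed
      show "AE p in \<mu> \<tau>. norm (bR (Rn i) (fst p) * chi (snd p / R0)) \<le> \<bar>fst p\<bar>" for i
      proof (rule AE_I2)
        fix p :: "real \<times> real"
        have "\<bar>bR (Rn i) (fst p)\<bar> * \<bar>chi (snd p / R0)\<bar> \<le> \<bar>fst p\<bar> * 1"
          using bR_bound chi_bounds by (intro mult_mono) auto
        then show "norm (bR (Rn i) (fst p) * chi (snd p / R0)) \<le> \<bar>fst p\<bar>" by (simp add: abs_mult)
      qed
    qed
    then show ?thesis unfolding \<Phi>_def xc_def .
  qed
  have Hconv: "(\<lambda>n. H n s) \<longlonglongrightarrow> G s" if s: "s \<ge> 0" for s
    unfolding H_def G_def
  proof (rule integral_dominated_convergence[where w = "\<lambda>p. C * \<bar>F (\<mu> s) (fst p) (snd p)\<bar>"])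
    show "(\<lambda>p. F (\<mu> s) (fst p) (snd p)) \<in> borel_measurable (\<mu> s)"
      using borel_measurable_continuous_onI[OF Fcont[OF muP[OF s]]]
      by (simp add: measurable_cong_sets[OF musets[OF s] refl])
    show "(\<lambda>p. F (\<mu> s) (fst p) (snd p) * \<psi> i p) \<in> borel_measurable (\<mu> s)" for i
      using borel_measurable_continuous_onI[OF continuous_on_mult[OF Fcont[OF muP[OF s]] \<psi>cont]]
      by (simp add: measurable_cong_sets[OF musets[OF s] refl])
    show "integrable (\<mu> s) (\<lambda>p. C * \<bar>F (\<mu> s) (fst p) (snd p)\<bar>)"
      using Faint[OF muP[OF s] muP2[OF s]] by simp
    show "AE p in \<mu> s. (\<lambda>n. F (\<mu> s) (fst p) (snd p) * \<psi> n p) \<longlonglongrightarrow> F (\<mu> s) (fst p) (snd p)"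
      using muAE[OF s]
    proof eventually_elim
      case (elim p)
      have "eventually (\<lambda>n. F (\<mu> s) (fst p) (snd p) * \<psi> n p = F (\<mu> s) (fst p) (snd p)) sequentially"
        using \<psi>one[OF elim] by (elim eventually_mono) auto
      then show ?case by (rule tendsto_eventually)
    qed
    show "AE p in \<mu> s. norm (F (\<mu> s) (fst p) (snd p) * \<psi> i p) \<le> C * \<bar>F (\<mu> s) (fst p) (snd p)\<bar>" for i
    proof (rule AE_I2)
      fix p :: "real \<times> real"
      have "\<bar>F (\<mu> s) (fst p) (snd p)\<bar> * \<bar>\<psi> i p\<bar> \<le> \<bar>F (\<mu> s) (fst p) (snd p)\<bar> * C"
        by (rule mult_left_mono[OF \<psi>b abs_ge_zero])
      then show "norm (F (\<mu> s) (fst p) (snd p) * \<psi> i p) \<le> C * \<bar>F (\<mu> s) (fst p) (snd p)\<bar>"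
        by (simp add: abs_mult mult.commute)
    qed
  qed
  have Hbound: "\<bar>H n s\<bar> \<le> C * A s" if s: "s \<ge> 0" for n s
  proof -
    have "\<bar>H n s\<bar> \<le> (\<integral>p. C * \<bar>F (\<mu> s) (fst p) (snd p)\<bar> \<partial>\<mu> s)"
      unfolding H_def
    proof (rule integral_abs_bound_integral)
      show "integrable (\<mu> s) (\<lambda>p. F (\<mu> s) (fst p) (snd p) * \<psi> n p)" by (intro FPint muP muP2 s)
      show "integrable (\<mu> s) (\<lambda>p. C * \<bar>F (\<mu> s) (fst p) (snd p)\<bar>)"
        using Faint[OF muP[OF s] muP2[OF s]] by simp
      fix p :: "real \<times> real"
      have "\<bar>F (\<mu> s) (fst p) (snd p)\<bar> * \<bar>\<psi> n p\<bar> \<le> \<bar>F (\<mu> s) (fst p) (snd p)\<bar> * C"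
        by (rule mult_left_mono[OF \<psi>b abs_ge_zero])
      then show "\<bar>F (\<mu> s) (fst p) (snd p) * \<psi> n p\<bar> \<le> C * \<bar>F (\<mu> s) (fst p) (snd p)\<bar>"
        by (simp add: abs_mult mult.commute)
    qed
    then show ?thesis by (simp add: A_def)
  qed
  have IntLim: "(\<lambda>n. integral {0..t} (H n)) \<longlonglongrightarrow> integral {0..t} G" if t: "t \<ge> 0" for t
  proof (rule dominated_convergence(2)[of "\<lambda>n. H n" "{0..t}" "\<lambda>s. C * A s" G])
    show "H n integrable_on {0..t}" for n
    proof (rule integrable_continuous_interval)
      have "continuous_on {0..} (H n)" unfolding continuous_on_def using Hlim by auto
      then show "continuous_on {0..t} (H n)" by (rule continuous_on_subset) auto
    qed
    show "(\<lambda>s. C * A s) integrable_on {0..t}"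
      by (rule integrable_continuous_interval, intro continuous_intros continuous_on_subset[OF Acont]) auto
    show "\<And>n s. s \<in> {0..t} \<Longrightarrow> norm (H n s) \<le> C * A s" using Hbound by auto
    show "\<And>s. s \<in> {0..t} \<Longrightarrow> (\<lambda>n. H n s) \<longlonglongrightarrow> G s" using Hconv by auto
  qed
  have xceq: "xc t = xc 0 + integral {0..t} G" if t: "t \<ge> 0" for t
  proof -
    have "(\<lambda>n. \<Phi> n t) \<longlonglongrightarrow> xc 0 + integral {0..t} G"
      using tendsto_add[OF \<Phi>lim[of 0] IntLim[OF t]] Eq[OF t] by simp
    from LIMSEQ_unique[OF \<Phi>lim[OF t] this] show ?thesis .
  qed
  have nuP2: "\<nu> \<in> P2" using nu_prob nu_sets nu_mom by (simp add: P2_def)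
  show ?thesis
  proof (intro allI impI exI conjI)
    fix t :: real assume t: "0 \<le> t"
    show "(xc has_real_derivative G t) (at t within {0..})"
    proof -
      have "((\<lambda>u. integral {0..u} G) has_real_derivative G t) (at t within {0..t+1})"
        by (rule integral_has_real_derivative) (use continuous_on_subset[OF Gcont] t in auto)
      from DERIV_add[OF DERIV_const this]
      have "((\<lambda>u. xc 0 + integral {0..u} G) has_real_derivative G t) (at t within {0..t+1})"
        by simp
      then have d: "(xc has_real_derivative G t) (at t within {0..t+1})"
        by (rule has_field_derivative_transform_within[where d=1]) (use t in \<open>auto intro!: xceq[symmetric]\<close>)
      have "at t within {0..t+1} = at t within {0..}"
        by (rule at_within_nhd[where S="{..<t+1}"]) auto
      then show ?thesis using d by simp
    qed
    let ?c = "xc t"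
    have mt: "\<mu>t t = return borel ?c \<Otimes>\<^sub>M \<nu>" unfolding \<mu>t_def xc_def by simp
    note DP = dirac_prod[OF nu_prob nu_sets nu_mom, of ?c]
    have mtP: "\<mu>t t \<in> P2nu \<nu>" using DP(2) mt by simp
    have mtP2: "\<mu>t t \<in> P2" using mtP by (simp add: P2nu_def)
    have T1: "\<bar>G t - (\<integral>p. F (\<mu>t t) (fst p) (snd p) \<partial>\<mu> t)\<bar> \<le> \<kappa> * M * W1 (\<mu> t) (\<mu>t t)"
      unfolding G_def
    proof (rule int_diff_bound[OF muprob[OF t] Fint[OF muP[OF t] muP2[OF t]] Fint[OF mtP muP2[OF t]]])
      show "AE p in \<mu> t. \<bar>F (\<mu> t) (fst p) (snd p) - F (\<mu>t t) (fst p) (snd p)\<bar> \<le> \<kappa> * M * W1 (\<mu> t) (\<mu>t t)"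
        using muAE[OF t] by eventually_elim (intro A1_0 muP t mtP)
    qed
    have T2: "\<bar>(\<integral>p. F (\<mu>t t) (fst p) (snd p) \<partial>\<mu> t) - (\<integral>p. F (\<mu>t t) (fst p) (snd p) \<partial>\<mu>t t)\<bar> \<le> L * W1 (\<mu> t) (\<mu>t t)"
      by (rule W1_lip[OF muP2[OF t] mtP2 Fcont[OF mtP] Flip[OF mtP] L0 Fint[OF mtP muP2[OF t]] Fint[OF mtP mtP2]])
    have fc: "continuous_on UNIV (\<lambda>w. F (\<mu>t t) ?c w)"
    proof -
      have "continuous_on UNIV ((\<lambda>p. F (\<mu>t t) (fst p) (snd p)) \<circ> (\<lambda>w. (?c, w)))"
        by (rule continuous_on_compose[OF _ continuous_on_subset[OF Fcont[OF mtP]]]) (auto intro: continuous_intros)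
      then show ?thesis by (simp add: o_def)
    qed
    have fl: "\<bar>F (\<mu>t t) ?c w - F (\<mu>t t) ?c w'\<bar> \<le> I * dist w w'" for w w'
      using Flip1[OF mtP, of ?c w ?c w'] by (simp add: dist_real_def)
    have fi: "integrable \<nu> (\<lambda>w. F (\<mu>t t) ?c w)" by (rule lip_integrable[OF nuP2 fc fl])
    have T3: "(\<integral>p. F (\<mu>t t) (fst p) (snd p) \<partial>\<mu>t t) = (\<integral>w. F (\<mu>t t) ?c w \<partial>\<nu>)"
    proof -
      have s: "sets (\<mu>t t) = sets borel" using P2D(2)[OF mtP2] .
      have "(\<integral>p. F (\<mu>t t) (fst p) (snd p) \<partial>\<mu>t t) = (\<integral>p. F (\<mu>t t) ?c (snd p) \<partial>\<mu>t t)"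
      proof (rule integral_cong_AE)
        show "(\<lambda>p. F (\<mu>t t) (fst p) (snd p)) \<in> borel_measurable (\<mu>t t)"
          using borel_measurable_continuous_onI[OF Fcont[OF mtP]] by (simp add: measurable_cong_sets[OF s refl])
        have "(\<lambda>p. F (\<mu>t t) ?c (snd p)) \<in> borel_measurable borel"
          by (rule borel_measurable_continuous_onI)
             (rule continuous_on_compose2[OF fc], auto intro: continuous_intros)
        then show "(\<lambda>p. F (\<mu>t t) ?c (snd p)) \<in> borel_measurable (\<mu>t t)"
          by (simp add: measurable_cong_sets[OF s refl])
        show "AE p in \<mu>t t. F (\<mu>t t) (fst p) (snd p) = F (\<mu>t t) ?c (snd p)"
          using DP(3) unfolding mt[symmetric] by eventually_elim simp
      qed
      also have "\<dots> = (\<integral>w. F (\<mu>t t) ?c w \<partial>\<nu>)"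
        using coupling_snd(2)[OF DP(1) borel_measurable_continuous_onI[OF fc]] mt by simp
      finally show ?thesis .
    qed
    have omc: "\<bar>w - \<omega>c\<bar> \<le> \<gamma>" if w: "w \<in> \<Omega>" for w
    proof -
      have iid: "integrable \<nu> (\<lambda>w. w)"
        by (rule lip_integrable[OF nuP2, of _ 1]) (auto simp: dist_real_def intro: continuous_intros)
      have bdd: "bdd_above {\<bar>w - w'\<bar> | w w'. w \<in> msupport \<nu> \<and> w' \<in> msupport \<nu>}"
        unfolding bdd_above_def
      proof (intro exI[of _ "2 * R0"] ballI)
        fix x assume "x \<in> {\<bar>w - w'\<bar> | w w'. w \<in> msupport \<nu> \<and> w' \<in> msupport \<nu>}"
        then obtain a b where "x = \<bar>a - b\<bar>" "a \<in> \<Omega>" "b \<in> \<Omega>" unfolding \<Omega>_def by blast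
        then show "x \<le> 2 * R0" using R0(2)[of a] R0(2)[of b] by linarith
      qed
      have "\<bar>(\<integral>x. w \<partial>\<nu>) - (\<integral>x. x \<partial>\<nu>)\<bar> \<le> \<gamma>"
      proof (rule int_diff_bound[OF nu_prob _ iid])
        show "integrable \<nu> (\<lambda>x. w)" by simp
        show "AE x in \<nu>. \<bar>w - x\<bar> \<le> \<gamma>"
          using AEO
        proof eventually_elim
          case (elim x)
          show ?case unfolding \<gamma>_def
            by (rule cSup_upper[OF _ bdd]) (use w elim in \<open>unfold \<Omega>_def, blast\<close>)
        qed
      qed
      then show ?thesis by (simp add: \<omega>c_def nu.prob_space)
    qed
    have T4: "\<bar>(\<integral>w. F (\<mu>t t) ?c w \<partial>\<nu>) - F (\<mu>t t) ?c \<omega>c\<bar> \<le> I * \<gamma>"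
    proof -
      have "\<bar>(\<integral>w. F (\<mu>t t) ?c w \<partial>\<nu>) - (\<integral>w. F (\<mu>t t) ?c \<omega>c \<partial>\<nu>)\<bar> \<le> I * \<gamma>"
      proof (rule int_diff_bound[OF nu_prob fi])
        show "integrable \<nu> (\<lambda>w. F (\<mu>t t) ?c \<omega>c)" by simp
        show "AE w in \<nu>. \<bar>F (\<mu>t t) ?c w - F (\<mu>t t) ?c \<omega>c\<bar> \<le> I * \<gamma>"
          using AEO
        proof eventually_elim
          case (elim w)
          have "\<bar>F (\<mu>t t) ?c w - F (\<mu>t t) ?c \<omega>c\<bar> \<le> I * \<bar>w - \<omega>c\<bar>"
            using fl[of w \<omega>c] by (simp add: dist_real_def)
          also have "\<dots> \<le> I * \<gamma>" using omc[OF elim] pos by (intro mult_left_mono) auto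
          finally show ?case .
        qed
      qed
      then show ?thesis by (simp add: nu.prob_space)
    qed
    have "\<bar>G t - F (\<mu>t t) ?c \<omega>c\<bar> \<le> \<kappa> * M * W1 (\<mu> t) (\<mu>t t) + L * W1 (\<mu> t) (\<mu>t t) + I * \<gamma>"
      using T1 T2 T3 T4 by linarith
    then show "\<bar>G t - F (\<mu>t t) (xc t) \<omega>c\<bar> \<le> ((\<kappa> + 1) * I + \<kappa> * M) * W1 (\<mu> t) (\<mu>t t) + I * \<gamma>"
      by (simp add: L_def algebra_simps)
  qed
qed


end
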